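(* Let $V$ be a locally free sheaf of rank $\alpha$ on $\mathbb{P}^1$, let $D=\sum_{i=1}^r m_i c_i$ be a positive divisor on $\mathbb{P}^1$ with support $C=\{c_1,\dots,c_r\}$, and let $\nabla: V\to \Omega^1_{\mathbb{P}^1}(D)\otimes_{\mathcal{O}_{\mathbb{P}^1}} V$ be an irreducible meromorphic connection on $V$ with pole divisor $D$. Let $\omega$ be a non-zero global meromorphic section of $V$ whose poles lie in $C\cup\{\infty\}$. Then: (1) the sections $\{\nabla^i\omega \mid i=0,1,2,\ldots\}$ generate (span) every fiber $V_b$, $b\in\mathbb{P}^1\setminus (C\cup\{\infty\})$; (2) the sections $\{\nabla^i\omega\mid i=0,1,\ldots,\alpha-1\}$ generate a generic fiber $V_b$.
   Context: A meromorphic connection on $V$ with pole divisor $D$ is a $\mathbb{C}$-linear sheaf map $\nabla: V\to \Omega^1_{\mathbb{P}^1}(D)\otimes V$ with $\nabla(f\omega)=df\otimes\omega+f\nabla\omega$, where $\Omega^1_{\mathbb{P}^1}(D)$ is the sheaf of meromorphic $1$-forms with poles only at the $c_i$, of order bounded by $m_i$ at $c_i$. Let $t$ be the affine coordinate on $\mathbb{C}=\mathbb{P}^1\setminus\{\infty\}$; here $\nabla\omega$ denotes $\nabla_{\partial/\partial t}\omega$ (compose $\nabla$ with the vector field $\partial/\partial t$), which maps global meromorphic sections of $V$ with poles in $C\cup\{\infty\}$ to such sections, and $\nabla^i$ is its $i$-fold iterate. For $b\notin C$, there is a local frame of flat sections ($\nabla e=0$) near $b$; analytic continuation along loops in $\mathbb{P}^1\setminus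 C$ gives the monodromy representation $T:\pi_1(\mathbb{P}^1\setminus C,b)\to GL(V_b)$. $\nabla$ is called irreducible if the orbit under the monodromy of any non-zero element of $V_b$ spans $V_b$. *)

theory Defs
  imports "HOL-Complex_Analysis.Complex_Analysis" "HOL-Computational_Algebra.Polynomial"
begin

text \<open>V restricted to the affine line is trivialised by a (rational) frame; in this frame
  nabla_{d/dt} = d/dt + A(t), with A a matrix of rational functions whose poles lie in the
  finite part C of the polar set. Sections are vectors of rational functions.\<close>

definition rational_on :: "complex set \<Rightarrow> (complex \<Rightarrow> complex) \<Rightarrow> bool" where
  "rational_on S f \<longleftrightarrow> (\<exists>p q. \<forall>t\<in>S. poly q t \<noteq> 0 \<and> f t = poly p t / poly q t)"

definition rational_vec_on :: "complex set \<Rightarrow> (complex \<Rightarrow> complex^'n) \<Rightarrow> bool" where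
  "rational_vec_on S w \<longleftrightarrow> (\<forall>i. rational_on S (\<lambda>t. w t $ i))"

definition rational_mat_on :: "complex set \<Rightarrow> (complex \<Rightarrow> complex^'n^'n) \<Rightarrow> bool" where
  "rational_mat_on S A \<longleftrightarrow> (\<forall>i j. rational_on S (\<lambda>t. A t $ i $ j))"

definition conn :: "(complex \<Rightarrow> complex^'n^'n) \<Rightarrow> (complex \<Rightarrow> complex^'n) \<Rightarrow> complex \<Rightarrow> complex^'n" where
  "conn A w = (\<lambda>t. (\<chi> i. deriv (\<lambda>s. w s $ i) t) + A t *v w t)"

definition flat_on :: "(complex \<Rightarrow> complex^'n^'n) \<Rightarrow> complex set \<Rightarrow> (complex \<Rightarrow> complex^'n) \<Rightarrow> bool" where
  "flat_on A U y \<longleftrightarrow> (\<forall>i. (\<lambda>s. y s $ i) holomorphic_on U) \<and> (\<forall>t\<in>U. conn A y t = 0)"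

text \<open>Y is an analytic continuation of a flat section along the path g (parametrised on [0,1]):
  locally near every parameter s, Y is given by a flat section on a disc around g s.\<close>
definition flat_along :: "(complex \<Rightarrow> complex^'n^'n) \<Rightarrow> complex set \<Rightarrow> (real \<Rightarrow> complex) \<Rightarrow> (real \<Rightarrow> complex^'n) \<Rightarrow> bool" where
  "flat_along A C g Y \<longleftrightarrow>
     (\<forall>s\<in>{0..1}. \<exists>e>0. ball (g s) e \<subseteq> - C \<and>
        (\<exists>y. flat_on A (ball (g s) e) y \<and>
             (\<exists>d>0. \<forall>s'\<in>{0..1}. \<bar>s' - s\<bar> < d \<longrightarrow> g s' \<in> ball (g s) e \<and> Y s' = y (g s'))))"

definition monodromy_orbit :: "(complex \<Rightarrow> complex^'n^'n) \<Rightarrow> complex set \<Rightarrow> complex \<Rightarrow> complex^'n \<Rightarrow> (complex^'n) set" where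
  "monodromy_orbit A C b v = {Y 1 | g Y. path g \<and> pathstart g = b \<and> pathfinish g = b \<and>
      path_image g \<subseteq> - C \<and> flat_along A C g Y \<and> Y 0 = v}"

definition irreducible_conn :: "(complex \<Rightarrow> complex^'n^'n) \<Rightarrow> complex set \<Rightarrow> bool" where
  "irreducible_conn A C \<longleftrightarrow>
     (\<exists>b. b \<notin> C \<and> (\<forall>v. v \<noteq> 0 \<longrightarrow> vec.span (monodromy_orbit A C b v) = UNIV))"

end

theory Submission
  imports Defs
begin

no_notation fps_nth (infixl \<open>$\<close> 75)

lemma norm_le_l1_vec: "norm (x::complex^'n) \<le> (\<Sum>i\<in>UNIV. norm (x$i))"
  by (simp add: norm_vec_def L2_set_le_sum)

lemma norm_vec_bound:
  assumes "\<And>i. norm ((x::complex^'n)$i) \<le> a"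
  shows "norm x \<le> real CARD('n) * a"
proof -
  have "norm x \<le> (\<Sum>i\<in>UNIV. norm (x$i))" by (rule norm_le_l1_vec)
  also have "\<dots> \<le> (\<Sum>i\<in>(UNIV::'n set). a)" by (rule sum_mono) (use assms in auto)
  finally show ?thesis by simp
qed

lemma mat_bound:
  fixes B :: "complex \<Rightarrow> complex^'n^'n"
  assumes cont: "\<And>i j. continuous_on K (\<lambda>t. B t $ i $ j)" and K: "compact K"
  shows "\<exists>L\<ge>0. \<forall>t\<in>K. \<forall>v i. norm ((B t *v v)$i) \<le> L * norm v"
proof -
  have "\<forall>i j. \<exists>M. \<forall>t\<in>K. norm (B t $ i $ j) \<le> M"
  proof (intro allI)
    fix i j
    have "compact ((\<lambda>t. B t $ i $ j) ` K)" by (rule compact_continuous_image[OF cont K])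
    then have "bounded ((\<lambda>t. B t $ i $ j) ` K)" by (rule compact_imp_bounded)
    then show "\<exists>M. \<forall>t\<in>K. norm (B t $ i $ j) \<le> M" by (auto simp: bounded_iff)
  qed
  then obtain M where M: "\<And>i j t. t \<in> K \<Longrightarrow> norm (B t $ i $ j) \<le> M i j" by metis
  define L where "L = (\<Sum>i\<in>UNIV. \<Sum>j\<in>UNIV. max 0 (M i j))"
  have L0: "L \<ge> 0" unfolding L_def by (intro sum_nonneg) auto
  have "norm ((B t *v v)$i) \<le> L * norm v" if t: "t \<in> K" for t v i
  proof -
    have "norm ((B t *v v)$i) = norm (\<Sum>j\<in>UNIV. B t $ i $ j * v $ j)"
      by (simp add: matrix_vector_mult_def)
    also have "\<dots> \<le> (\<Sum>j\<in>UNIV. norm (B t $ i $ j * v $ j))" by (rule norm_sum)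
    also have "\<dots> \<le> (\<Sum>j\<in>UNIV. max 0 (M i j) * norm v)"
    proof (rule sum_mono)
      fix j
      have "norm (B t $ i $ j * v $ j) = norm (B t $ i $ j) * norm (v $ j)" by (simp add: norm_mult)
      also have "\<dots> \<le> max 0 (M i j) * norm v"
        by (intro mult_mono) (use M[OF t, of i j] Finite_Cartesian_Product.norm_nth_le[of v j] in auto)
      finally show "norm (B t $ i $ j * v $ j) \<le> max 0 (M i j) * norm v" .
    qed
    also have "\<dots> = (\<Sum>j\<in>UNIV. max 0 (M i j)) * norm v" by (simp add: sum_distrib_right)
    also have "\<dots> \<le> L * norm v"
    proof (rule mult_right_mono)
      show "(\<Sum>j\<in>UNIV. max 0 (M i j)) \<le> L" unfolding L_def
        using member_le_sum[of i UNIV "\<lambda>i. \<Sum>j\<in>UNIV. max 0 (M i j)"] by (simp add: sum_nonneg)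
    qed simp
    finally show ?thesis .
  qed
  with L0 show ?thesis by blast
qed

lemma deriv_bound_zero:
  assumes "convex D" and der: "\<And>x. x \<in> D \<Longrightarrow> (g has_field_derivative g' x) (at x)"
    and bnd: "\<And>x. x \<in> D \<Longrightarrow> norm (g' x) \<le> K" and "t1 \<in> D" "t \<in> D" and "g t1 = 0"
    and diam: "norm (t - t1) \<le> d" and "K \<ge> 0"
  shows "norm (g t) \<le> K * d"
proof -
  have "norm (g t - g t1) \<le> K * norm (t - t1)"
    by (rule field_differentiable_bound[OF assms(1) has_field_derivative_at_within[OF der] bnd])
       (use assms in auto)
  also have "\<dots> \<le> K * d" using diam \<open>K \<ge> 0\<close> by (simp add: mult_left_mono)
  finally show ?thesis using \<open>g t1 = 0\<close> by simp
qed

definition solves :: "(complex \<Rightarrow> complex^'n^'n) \<Rightarrow> complex set \<Rightarrow> (complex \<Rightarrow> complex^'n) \<Rightarrow> bool" where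
  "solves B D y \<longleftrightarrow> (\<forall>t\<in>D. \<forall>i. ((\<lambda>s. y s $ i) has_field_derivative (B t *v y t) $ i) (at t))"

lemma holo_mv:
  fixes B :: "complex \<Rightarrow> complex^'n^'n"
  assumes "\<And>i j. (\<lambda>t. B t $ i $ j) holomorphic_on D" "\<And>i. (\<lambda>t. y t $ i) holomorphic_on D"
  shows "(\<lambda>t. (B t *v y t) $ i) holomorphic_on D"
  unfolding matrix_vector_mult_def using assms by (auto intro!: holomorphic_intros)


lemma picard:
  fixes B :: "complex \<Rightarrow> complex^'n^'n" and c :: "complex^'n"
  assumes D: "open D" "convex D" "t1 \<in> D"
    and hol: "\<And>i j. (\<lambda>t. B t $ i $ j) holomorphic_on D"
    and bnd: "\<And>t v i. t \<in> D \<Longrightarrow> norm ((B t *v v)$i) \<le> L * norm v"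
    and diam: "\<And>t. t \<in> D \<Longrightarrow> norm (t - t1) \<le> d"
    and small: "real CARD('n) * (L * d) \<le> 1/2" and L0: "L \<ge> 0" and d0: "d \<ge> 0"
  shows "\<exists>y. solves B D y \<and> y t1 = c"
proof -
  define prim where "prim f = (SOME g. (\<forall>x\<in>D. (g has_field_derivative f x) (at x)) \<and> g t1 = 0)"
    for f :: "complex \<Rightarrow> complex"
  have prim: "(\<forall>x\<in>D. (prim f has_field_derivative f x) (at x)) \<and> prim f t1 = 0"
    if hf: "f holomorphic_on D" for f
  proof -
    obtain g where g: "\<And>x. x\<in>D \<Longrightarrow> (g has_field_derivative f x) (at x within D)"
      using holomorphic_convex_primitive'[OF D(2) D(1) hf] by blast
    have g': "(g has_field_derivative f x) (at x)" if "x \<in> D" for x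
      using g[OF that] at_within_open[OF that D(1)] by simp
    have "\<forall>x\<in>D. ((\<lambda>x. g x - g t1) has_field_derivative f x) (at x)"
      using g' by (auto intro!: derivative_eq_intros)
    then have "\<exists>g. (\<forall>x\<in>D. (g has_field_derivative f x) (at x)) \<and> g t1 = 0"
      by (intro exI[of _ "\<lambda>x. g x - g t1"]) auto
    then show ?thesis unfolding prim_def by (rule someI_ex)
  qed
  define y :: "nat \<Rightarrow> complex \<Rightarrow> complex^'n" where
    "y = rec_nat (\<lambda>t. c) (\<lambda>m ym t. c + (\<chi> i. prim (\<lambda>s. (B s *v ym s)$i) t))"
  have y0: "y 0 = (\<lambda>t. c)" by (simp add: y_def)
  have ySuc: "y (Suc m) = (\<lambda>t. c + (\<chi> i. prim (\<lambda>s. (B s *v y m s)$i) t))" for m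
    by (simp add: y_def)
  have inv: "(\<forall>i. (\<lambda>s. y m s $ i) holomorphic_on D) \<and> y m t1 = c" for m
  proof (induction m)
    case 0
    then show ?case by (simp add: y0)
  next
    case (Suc m)
    have hf: "(\<lambda>s. (B s *v y m s)$i) holomorphic_on D" for i
      by (rule holo_mv) (use hol Suc in auto)
    have "(\<lambda>s. y (Suc m) s $ i) holomorphic_on D" for i
    proof -
      have "\<forall>x\<in>D. ((\<lambda>s. y (Suc m) s $ i) has_field_derivative (B x *v y m x)$i) (at x)"
        using prim[OF hf[of i]] by (auto simp: ySuc intro!: derivative_eq_intros)
      then show ?thesis using holomorphic_on_open[OF D(1)] by blast
    qed
    moreover have "y (Suc m) t1 = c"
      using prim[OF hf] by (simp add: ySuc vec_eq_iff)
    ultimately show ?case by blast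
  qed
  have hf: "(\<lambda>s. (B s *v y m s)$i) holomorphic_on D" for m i
    by (rule holo_mv) (use hol inv in auto)
  have dy: "((\<lambda>s. y (Suc m) s $ i) has_field_derivative (B t *v y m t)$i) (at t)"
    if "t \<in> D" for m t i
    using prim[OF hf[of m i]] that by (auto simp: ySuc intro!: derivative_eq_intros)
  have diff: "\<forall>t\<in>D. norm (y (Suc m) t - y m t) \<le> norm c * (1/2)^(Suc m)" for m
  proof (induction m)
    case 0
    show ?case
    proof
      fix t assume t: "t \<in> D"
      have "norm ((y (Suc 0) t - y 0 t) $ i) \<le> L * norm c * d" for i
      proof -
        have "(y (Suc 0) t - y 0 t) $ i = prim (\<lambda>s. (B s *v c)$i) t"
          by (simp add: ySuc y0)
        also have "norm \<dots> \<le> L * norm c * d"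
        proof (rule deriv_bound_zero[where g'="\<lambda>s. (B s *v c)$i", OF D(2) _ _ D(3) t])
          have hc: "((\<lambda>s. (B s *v c)$i) holomorphic_on D)" using hf[of 0 i] by (simp add: y0)
          then show "(prim (\<lambda>s. (B s *v c)$i) has_field_derivative (B x *v c)$i) (at x)" if "x \<in> D" for x
            using prim that by blast
          show "norm ((B x *v c)$i) \<le> L * norm c" if "x \<in> D" for x using bnd that by blast
          show "prim (\<lambda>s. (B s *v c)$i) t1 = 0" using prim hc by blast
          show "norm (t - t1) \<le> d" by (rule diam[OF t])
          show "0 \<le> L * norm c" using L0 by simp
        qed
        finally show ?thesis .
      qed
      then have "norm (y (Suc 0) t - y 0 t) \<le> real CARD('n) * (L * norm c * d)"
        by (rule norm_vec_bound)
      also have "\<dots> = (real CARD('n) * (L * d)) * norm c" by simp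
      also have "\<dots> \<le> 1/2 * norm c" by (rule mult_right_mono[OF small]) simp
      finally show "norm (y (Suc 0) t - y 0 t) \<le> norm c * (1/2)^(Suc 0)" by simp
    qed
  next
    case (Suc m)
    show ?case
    proof
      fix t assume t: "t \<in> D"
      have "norm ((y (Suc (Suc m)) t - y (Suc m) t) $ i) \<le> L * (norm c * (1/2)^(Suc m)) * d" for i
      proof -
        have "(y (Suc (Suc m)) t - y (Suc m) t) $ i =
              prim (\<lambda>s. (B s *v y (Suc m) s)$i) t - prim (\<lambda>s. (B s *v y m s)$i) t"
          by (simp add: ySuc)
        also have "norm \<dots> \<le> L * (norm c * (1/2)^(Suc m)) * d"
        proof (rule deriv_bound_zero[where g'="\<lambda>x. (B x *v (y (Suc m) x - y m x))$i", OF D(2) _ _ D(3) t])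
          show "((\<lambda>s. prim (\<lambda>s. (B s *v y (Suc m) s)$i) s - prim (\<lambda>s. (B s *v y m s)$i) s)
                  has_field_derivative (B x *v (y (Suc m) x - y m x))$i) (at x)" if "x \<in> D" for x
            using prim[OF hf[of "Suc m" i]] prim[OF hf[of m i]] that
            by (auto simp: matrix_vector_mult_diff_distrib intro!: derivative_eq_intros)
          show "norm ((B x *v (y (Suc m) x - y m x))$i) \<le> L * (norm c * (1/2)^(Suc m))"
            if "x \<in> D" for x
            using bnd[OF that, of "y (Suc m) x - y m x" i] Suc[rule_format, OF that] L0
            by (meson mult_left_mono order_trans)
          show "prim (\<lambda>s. (B s *v y (Suc m) s)$i) t1 - prim (\<lambda>s. (B s *v y m s)$i) t1 = 0"
            using prim[OF hf[of "Suc m" i]] prim[OF hf[of m i]] by simp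
          show "norm (t - t1) \<le> d" by (rule diam[OF t])
          show "0 \<le> L * (norm c * (1/2)^(Suc m))" using L0 by simp
        qed
        finally show ?thesis .
      qed
      then have "norm (y (Suc (Suc m)) t - y (Suc m) t) \<le> real CARD('n) * (L * (norm c * (1/2)^(Suc m)) * d)"
        by (rule norm_vec_bound)
      also have "\<dots> = (real CARD('n) * (L * d)) * (norm c * (1/2)^(Suc m))" by simp
      also have "\<dots> \<le> 1/2 * (norm c * (1/2)^(Suc m))" by (rule mult_right_mono[OF small]) simp
      finally show "norm (y (Suc (Suc m)) t - y (Suc m) t) \<le> norm c * (1/2)^(Suc (Suc m))" by simp
    qed
  qed
  define Y where "Y t = c + (\<Sum>j. y (Suc j) t - y j t)" for t
  have summ: "summable (\<lambda>j. norm c * (1/2::real)^(Suc j))"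
  proof -
    have "summable (\<lambda>j. (1/2::real)^j)" by (rule summable_geometric) simp
    then have "summable (\<lambda>j. (norm c / 2) * (1/2::real)^j)" by (rule summable_mult)
    moreover have "(\<lambda>j. norm c * (1/2::real)^(Suc j)) = (\<lambda>j. (norm c / 2) * (1/2::real)^j)"
      by (auto simp: fun_eq_iff)
    ultimately show ?thesis by simp
  qed
  have ul0: "uniform_limit D (\<lambda>n t. \<Sum>j<n. y (Suc j) t - y j t) (\<lambda>t. \<Sum>j. y (Suc j) t - y j t) sequentially"
    by (rule Weierstrass_m_test[OF _ summ]) (use diff in blast)
  have tel: "(\<Sum>j<n. y (Suc j) t - y j t) = y n t - c" for n t
    using sum_lessThan_telescope[of "\<lambda>j. y j t" n] by (simp add: y0)
  have ul: "uniform_limit D y Y sequentially"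
    unfolding uniform_limit_iff
  proof (intro allI impI)
    fix e :: real assume "e > 0"
    with ul0 have "\<forall>\<^sub>F n in sequentially. \<forall>x\<in>D. dist (\<Sum>j<n. y (Suc j) x - y j x) (\<Sum>j. y (Suc j) x - y j x) < e"
      unfolding uniform_limit_iff by blast
    moreover have "dist (\<Sum>j<n. y (Suc j) x - y j x) (\<Sum>j. y (Suc j) x - y j x) = dist (y n x) (Y x)" for n x
      unfolding tel Y_def dist_norm by (simp add: diff_diff_eq)
    ultimately show "\<forall>\<^sub>F n in sequentially. \<forall>x\<in>D. dist (y n x) (Y x) < e" by simp
  qed
  have ulc: "uniform_limit D (\<lambda>n s. y n s $ i) (\<lambda>s. Y s $ i) sequentially" for i
    by (rule bounded_linear.uniform_limit[OF bounded_linear_vec_nth ul])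
  have ulcS: "uniform_limit D (\<lambda>n s. y (Suc n) s $ i) (\<lambda>s. Y s $ i) sequentially" for i
    using filterlim_compose[OF ulc[of i] filterlim_Suc] .
  have ptw: "(\<lambda>n. y n x) \<longlonglongrightarrow> Y x" if "x \<in> D" for x
    by (rule tendsto_uniform_limitI[OF ul that])
  have sol: "solves B D Y" unfolding solves_def
  proof (intro ballI allI)
    fix t i assume t: "t \<in> D"
    have "\<exists>g'. \<forall>x \<in> D. ((\<lambda>s. Y s $ i) has_field_derivative g' x) (at x) \<and>
             ((\<lambda>n. (B x *v y n x)$i) \<longlongrightarrow> g' x) sequentially"
    proof (rule has_complex_derivative_uniform_sequence[where f="\<lambda>n s. y (Suc n) s $ i" and
          f'="\<lambda>n x. (B x *v y n x)$i" and g="\<lambda>s. Y s $ i", OF D(1)])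
      show "((\<lambda>s. y (Suc n) s $ i) has_field_derivative (B x *v y n x)$i) (at x)" if "x \<in> D" for n x
        by (rule dy[OF that])
      show "\<exists>d>0. cball x d \<subseteq> D \<and> uniform_limit (cball x d) (\<lambda>n s. y (Suc n) s $ i) (\<lambda>s. Y s $ i) sequentially"
        if "x \<in> D" for x
      proof -
        have "\<exists>e>0. cball x e \<subseteq> D"
          using D(1) that unfolding open_contains_cball by (rule bspec)
        then obtain e where e: "e > 0" "cball x e \<subseteq> D" by blast
        have "uniform_limit (cball x e) (\<lambda>n s. y (Suc n) s $ i) (\<lambda>s. Y s $ i) sequentially"
          by (rule uniform_limit_on_subset[OF ulcS e(2)])
        with e show ?thesis by blast
      qed
    qed
    then obtain g' where g': "\<And>x. x \<in> D \<Longrightarrow> ((\<lambda>s. Y s $ i) has_field_derivative g' x) (at x)"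
      "\<And>x. x \<in> D \<Longrightarrow> ((\<lambda>n. (B x *v y n x)$i) \<longlongrightarrow> g' x) sequentially" by blast
    have "((\<lambda>n. (B t *v y n t)$i) \<longlongrightarrow> (B t *v Y t)$i) sequentially"
      by (rule bounded_linear.tendsto[OF bounded_linear_compose[OF bounded_linear_vec_nth matrix_vector_mul_bounded_linear] ptw[OF t]])
    then have "g' t = (B t *v Y t)$i" by (rule LIMSEQ_unique[OF g'(2)[OF t]])
    with g'(1)[OF t] show "((\<lambda>s. Y s $ i) has_field_derivative (B t *v Y t) $ i) (at t)" by simp
  qed
  have "(\<lambda>n. y n t1) \<longlonglongrightarrow> c" using inv by simp
  then have "Y t1 = c" by (rule LIMSEQ_unique[OF ptw[OF D(3)]])
  with sol show ?thesis by blast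
qed


lemma ode_exists:
  fixes B :: "complex \<Rightarrow> complex^'n^'n"
  assumes S: "open S" and hol: "\<And>i j. (\<lambda>t. B t $ i $ j) holomorphic_on S" and t0: "t0 \<in> S"
  shows "\<exists>r>0. ball t0 r \<subseteq> S \<and> (\<forall>t1\<in>ball t0 r. \<forall>c. \<exists>y. solves B (ball t0 r) y \<and> y t1 = c)"
proof -
  have "\<exists>e>0. cball t0 e \<subseteq> S" using S t0 unfolding open_contains_cball by (rule bspec)
  then obtain r0 where r0: "r0 > 0" "cball t0 r0 \<subseteq> S" by blast
  have cont: "continuous_on (cball t0 r0) (\<lambda>t. B t $ i $ j)" for i j
    using holomorphic_on_imp_continuous_on[OF hol[of i j]] continuous_on_subset r0(2) by blast
  obtain L where L: "L \<ge> 0" "\<And>t v i. t \<in> cball t0 r0 \<Longrightarrow> norm ((B t *v v)$i) \<le> L * norm v"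
    using mat_bound[OF cont compact_cball] by blast
  define N where "N = real CARD('n)"
  have N0: "N \<ge> 0" by (simp add: N_def)
  define r where "r = min r0 (1/(4*N*L+1))"
  have "0 \<le> 4*N*L" using N0 L(1) by simp
  then have den: "4*N*L+1 > 0" by linarith
  have r: "r > 0" "r \<le> r0" using r0 den by (auto simp: r_def)
  have "(4*N*L+1) * r \<le> 1"
  proof -
    have "r \<le> 1/(4*N*L+1)" by (simp add: r_def)
    then show ?thesis using den by (simp add: field_simps)
  qed
  then have small: "N * (L * (2*r)) \<le> 1/2" using r by (simp add: algebra_simps)
  have sub0: "ball t0 r \<subseteq> cball t0 r0" using r(2) by (auto simp: subset_iff)
  have "ball t0 r \<subseteq> S" using sub0 r0(2) by (rule order_trans)
  moreover have "\<forall>t1\<in>ball t0 r. \<forall>c. \<exists>y. solves B (ball t0 r) y \<and> y t1 = c"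
  proof (intro ballI allI)
    fix t1 c assume t1: "t1 \<in> ball t0 r"
    show "\<exists>y. solves B (ball t0 r) y \<and> y t1 = c"
    proof (rule picard[where L=L and d="2*r"])
      show "open (ball t0 r)" "convex (ball t0 r)" "t1 \<in> ball t0 r" using t1 by auto
      show "(\<lambda>t. B t $ i $ j) holomorphic_on ball t0 r" for i j
        using hol \<open>ball t0 r \<subseteq> S\<close> holomorphic_on_subset by blast
      show "norm ((B t *v v)$i) \<le> L * norm v" if "t \<in> ball t0 r" for t v i
        using L(2) that sub0 by blast
      show "norm (t - t1) \<le> 2 * r" if "t \<in> ball t0 r" for t
      proof -
        have "norm (t - t1) \<le> dist t t0 + dist t0 t1" by (metis dist_norm dist_triangle)
        also have "\<dots> \<le> 2 * r" using that t1 by (simp add: dist_commute)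
        finally show ?thesis .
      qed
      show "real CARD('n) * (L * (2 * r)) \<le> 1/2" using small by (simp add: N_def)
      show "L \<ge> 0" "2 * r \<ge> 0" using L r by auto
    qed
  qed
  ultimately show ?thesis using r by blast
qed

lemma solves_cont:
  assumes "solves B W y" "open W"
  shows "continuous_on W (\<lambda>t. y t $ i)"
proof -
  have "\<forall>t\<in>W. isCont (\<lambda>s. y s $ i) t" using assms unfolding solves_def
    using DERIV_isCont by blast
  then show ?thesis by (simp add: continuous_at_imp_continuous_on)
qed

lemma solves_holo:
  assumes "solves B W y" "open W"
  shows "(\<lambda>t. y t $ i) holomorphic_on W"
  using assms unfolding solves_def holomorphic_on_open[OF assms(2)] by blast

lemma solves_mono: "solves B W y \<Longrightarrow> W2 \<subseteq> W \<Longrightarrow> solves B W2 y"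
  unfolding solves_def by blast

lemma solves_diff: "solves B W y \<Longrightarrow> solves B W z \<Longrightarrow> solves B W (\<lambda>t. y t - z t)"
  unfolding solves_def by (auto simp: matrix_vector_mult_diff_distrib intro!: derivative_eq_intros)

lemma solves_add: "solves B W y \<Longrightarrow> solves B W z \<Longrightarrow> solves B W (\<lambda>t. y t + z t)"
  unfolding solves_def by (auto simp: matrix_vector_right_distrib intro!: derivative_eq_intros)

lemma solves_scale: "solves B W y \<Longrightarrow> solves B W (\<lambda>t. a *s y t)"
  unfolding solves_def by (auto simp: vector_scalar_commute intro!: derivative_eq_intros)

lemma solves_zero: "solves B W (\<lambda>t. 0)"
  unfolding solves_def by auto

lemma ode_unique_local:
  fixes B :: "complex \<Rightarrow> complex^'n^'n"
  assumes W: "open W" and hol: "\<And>i j. (\<lambda>t. B t $ i $ j) holomorphic_on W"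
    and sol: "solves B W y" and t1: "t1 \<in> W" "y t1 = 0"
  shows "\<exists>r>0. ball t1 r \<subseteq> W \<and> (\<forall>t\<in>ball t1 r. y t = 0)"
proof -
  have "\<exists>e>0. cball t1 e \<subseteq> W" using W t1(1) unfolding open_contains_cball by (rule bspec)
  then obtain r0 where r0: "r0 > 0" "cball t1 r0 \<subseteq> W" by blast
  have cont: "continuous_on (cball t1 r0) (\<lambda>t. B t $ i $ j)" for i j
    using holomorphic_on_imp_continuous_on[OF hol[of i j]] continuous_on_subset r0(2) by blast
  obtain L where L: "L \<ge> 0" "\<And>t v i. t \<in> cball t1 r0 \<Longrightarrow> norm ((B t *v v)$i) \<le> L * norm v"
    using mat_bound[OF cont compact_cball] by blast
  have conty: "continuous_on (cball t1 r0) y"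
  proof -
    have "continuous_on (cball t1 r0) (\<lambda>t. \<chi> i. y t $ i)"
      by (intro continuous_on_vec_lambda continuous_on_subset[OF solves_cont[OF sol W] r0(2)])
    then show ?thesis by simp
  qed
  have "bounded (y ` cball t1 r0)"
    by (rule compact_imp_bounded[OF compact_continuous_image[OF conty compact_cball]])
  then obtain K0 where "\<forall>x\<in>y ` cball t1 r0. norm x \<le> K0" unfolding bounded_iff by blast
  then have K0: "\<And>t. t \<in> cball t1 r0 \<Longrightarrow> norm (y t) \<le> K0" by blast
  define K where "K = max K0 1"
  have K1: "K > 0" by (simp add: K_def)
  have K2: "norm (y t) \<le> K" if "t \<in> cball t1 r0" for t
    using K0[OF that] by (simp add: K_def le_max_iff_disj)
  note K = K1 K2
  define N where "N = real CARD('n)"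
  have N0: "N \<ge> 0" by (simp add: N_def)
  define r where "r = min r0 (1/(2*N*L+1))"
  have "0 \<le> 2*N*L" using N0 L(1) by simp
  then have den: "2*N*L+1 > 0" by linarith
  have r: "r > 0" "r \<le> r0" using r0 den by (auto simp: r_def)
  have "(2*N*L+1) * r \<le> 1"
  proof -
    have "r \<le> 1/(2*N*L+1)" by (simp add: r_def)
    then show ?thesis using den by (simp add: field_simps)
  qed
  then have small: "N * (L * r) \<le> 1/2" using r by (simp add: algebra_simps)
  have sub: "ball t1 r \<subseteq> cball t1 r0" using r(2) by (auto simp: subset_iff)
  have bnd: "\<forall>t\<in>ball t1 r. norm (y t) \<le> K * (1/2)^m" for m
  proof (induction m)
    case 0
    then show ?case using K sub by auto
  next
    case (Suc m)
    show ?case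
    proof
      fix t assume t: "t \<in> ball t1 r"
      have "norm (y t $ i) \<le> L * (K * (1/2)^m) * r" for i
      proof (rule deriv_bound_zero[where g="\<lambda>s. y s $ i" and g'="\<lambda>s. (B s *v y s)$i", OF convex_ball _ _ _ t])
        show "((\<lambda>s. y s $ i) has_field_derivative (B x *v y x)$i) (at x)" if "x \<in> ball t1 r" for x
          using sol that sub r0(2) unfolding solves_def by blast
        show "norm ((B x *v y x)$i) \<le> L * (K * (1/2)^m)" if "x \<in> ball t1 r" for x
        proof -
          have "norm ((B x *v y x)$i) \<le> L * norm (y x)" using L(2) that sub by blast
          also have "\<dots> \<le> L * (K * (1/2)^m)" using Suc that L(1) by (simp add: mult_left_mono)
          finally show ?thesis .
        qed
        show "t1 \<in> ball t1 r" using r by simp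
        show "y t1 $ i = 0" using t1 by simp
        show "norm (t - t1) \<le> r" using t by (simp add: dist_norm norm_minus_commute)
        show "0 \<le> L * (K * (1/2)^m)" using L K by simp
      qed
      then have "norm (y t) \<le> N * (L * (K * (1/2)^m) * r)" unfolding N_def by (rule norm_vec_bound)
      also have "\<dots> = (N * (L * r)) * (K * (1/2)^m)" by simp
      also have "\<dots> \<le> 1/2 * (K * (1/2)^m)" by (rule mult_right_mono[OF small]) (use K in simp)
      finally show "norm (y t) \<le> K * (1/2)^(Suc m)" by simp
    qed
  qed
  have "y t = 0" if t: "t \<in> ball t1 r" for t
  proof (rule ccontr)
    assume "y t \<noteq> 0"
    then have a: "norm (y t) / K > 0" using K by simp
    obtain m where "(1/2::real)^m < norm (y t) / K" using real_arch_pow_inv[OF a, of "1/2"] by auto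
    then have "K * (1/2)^m < norm (y t)" using K by (simp add: field_simps)
    moreover have "norm (y t) \<le> K * (1/2)^m" using bnd[of m] t by blast
    ultimately show False by linarith
  qed
  moreover have "ball t1 r \<subseteq> W" using sub r0 by blast
  ultimately show ?thesis using r by blast
qed

lemma ode_unique:
  fixes B :: "complex \<Rightarrow> complex^'n^'n"
  assumes W: "open W" "connected W" and hol: "\<And>i j. (\<lambda>t. B t $ i $ j) holomorphic_on W"
    and sol: "solves B W y" and t1: "t1 \<in> W" "y t1 = 0" and t: "t \<in> W"
  shows "y t = 0"
proof -
  obtain r where r: "r > 0" "ball t1 r \<subseteq> W" "\<And>s. s \<in> ball t1 r \<Longrightarrow> y s = 0"
    using ode_unique_local[OF W(1) hol sol t1] by blast
  have "y t $ i = 0" for i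
  proof -
    have "(\<lambda>s. y s $ i) t = (\<lambda>s. 0) t"
    proof (rule analytic_continuation_open[where s="ball t1 r" and s'=W and f="\<lambda>s. y s $ i" and g="\<lambda>s. 0"])
      show "(\<lambda>s. y s $ i) holomorphic_on W" by (rule solves_holo[OF sol W(1)])
    qed (use W r t in auto)
    then show ?thesis by simp
  qed
  then show ?thesis by (simp add: vec_eq_iff)
qed


definition pair :: "complex^'n \<Rightarrow> complex^'n \<Rightarrow> complex" where
  "pair c w = (\<Sum>i\<in>UNIV. c$i * w$i)"

lemma pair_add_right: "pair c (v + w) = pair c v + pair c w"
  by (simp add: pair_def algebra_simps sum.distrib)
lemma pair_scale_right: "pair c (a *s v) = a * pair c v"
  by (simp add: pair_def algebra_simps sum_distrib_left)
lemma pair_zero_right[simp]: "pair c 0 = 0"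
  by (simp add: pair_def)
lemma pair_zero_left[simp]: "pair 0 c = 0"
  by (simp add: pair_def)
lemma pair_commute: "pair c v = pair v c"
  by (simp add: pair_def mult.commute)
lemma pair_diff_left: "pair (c - d) v = pair c v - pair d v"
  by (simp add: pair_def algebra_simps sum_subtractf)
lemma pair_axis: "pair c (axis i 1) = c $ i"
proof -
  have "pair c (axis i 1) = (\<Sum>ia\<in>UNIV. if ia = i then c$ia else 0)"
    unfolding pair_def axis_def by (rule sum.cong) auto
  then show ?thesis by simp
qed

lemma pair_eq_0_all:
  assumes "\<And>c. pair c v = 0" shows "v = 0"
proof -
  have "v $ i = 0" for i
  proof -
    have "v $ i = pair (axis i 1) v" by (simp add: pair_commute[of "axis i 1"] pair_axis)
    then show ?thesis using assms by simp
  qed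
  then show ?thesis by (simp add: vec_eq_iff)
qed

lemma vec_nonzero_pair:
  assumes "c \<noteq> 0" shows "\<exists>v. pair c v \<noteq> 0"
proof -
  obtain i where "c $ i \<noteq> 0" using assms by (auto simp: vec_eq_iff)
  then show ?thesis using pair_axis[of c i] by metis
qed

lemma annihilator_exists:
  fixes S :: "(complex^'n) set"
  assumes S: "vec.subspace S" and ne: "S \<noteq> UNIV"
  shows "\<exists>c. c \<noteq> 0 \<and> (\<forall>v\<in>S. pair c v = 0)"
proof -
  obtain B where B: "B \<subseteq> S" "vec.independent B" "S \<subseteq> vec.span B"
    by (rule vec.basis_exists[of S])
  define B' where "B' = vec.extend_basis B"
  have BB': "B \<subseteq> B'" unfolding B'_def by (rule vec.extend_basis_superset[OF B(2)])
  have iB': "vec.independent B'" unfolding B'_def by (rule vec.independent_extend_basis[OF B(2)])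
  have sB': "vec.span B' = UNIV" unfolding B'_def by (rule vec.span_extend_basis[OF B(2)])
  have inB': "x \<in> vec.span B'" for x by (simp add: sB')
  have "\<not> B' \<subseteq> B"
  proof
    assume "B' \<subseteq> B"
    then have "vec.span B' \<subseteq> vec.span B" by (rule vec.span_mono)
    also have "vec.span B \<subseteq> S" by (rule vec.span_minimal[OF B(1) S])
    finally show False using sB' ne by auto
  qed
  then obtain e where e: "e \<in> B'" "e \<notin> B" by blast
  define f where "f v = vec.representation B' v e" for v
  have f_add: "f (v + w) = f v + f w" for v w
    unfolding f_def vec.representation_add[OF iB' inB' inB'] ..
  have f_scale: "f (a *s v) = a * f v" for a v
    unfolding f_def vec.representation_scale[OF iB' inB'] ..
  have f_sum: "f (\<Sum>i\<in>I. g i) = (\<Sum>i\<in>I. f (g i))" for I and g :: "'n \<Rightarrow> complex^'n"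
    unfolding f_def vec.representation_sum[OF iB' inB'] ..
  have fS: "f v = 0" if "v \<in> S" for v
  proof -
    have "vec.representation B' v = vec.representation B v"
      by (rule vec.representation_extend[OF iB' _ BB']) (use that B(3) in blast)
    then show ?thesis unfolding f_def using vec.representation_ne_zero[of B v e] e(2) by auto
  qed
  have fe: "f e = 1"
    unfolding f_def using vec.representation_basis[OF iB' e(1)] by simp
  define c where "c = (\<chi> i. f (axis i 1))"
  have fpair: "f v = pair c v" for v
  proof -
    have "f v = f (\<Sum>i\<in>UNIV. v$i *s axis i 1)" by (simp add: basis_expansion)
    also have "\<dots> = (\<Sum>i\<in>UNIV. v$i * f (axis i 1))" by (simp add: f_sum f_scale)
    also have "\<dots> = pair c v" by (simp add: pair_def c_def mult.commute)
    finally show ?thesis .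
  qed
  have "c \<noteq> 0" using fe fpair[of e] by auto
  moreover have "\<forall>v\<in>S. pair c v = 0" using fS fpair by simp
  ultimately show ?thesis by blast
qed


lemma rat_cong: "rational_on S f \<Longrightarrow> (\<And>t. t \<in> S \<Longrightarrow> f t = g t) \<Longrightarrow> rational_on S g"
  unfolding rational_on_def by metis

lemma rat_const: "rational_on S (\<lambda>t. c)"
  unfolding rational_on_def by (rule exI[of _ "[:c:]"], rule exI[of _ 1]) simp

lemma rat_add:
  assumes "rational_on S f" "rational_on S g"
  shows "rational_on S (\<lambda>t. f t + g t)"
proof -
  obtain p1 q1 where 1: "\<And>t. t \<in> S \<Longrightarrow> poly q1 t \<noteq> 0 \<and> f t = poly p1 t / poly q1 t"
    using assms(1) unfolding rational_on_def by blast
  obtain p2 q2 where 2: "\<And>t. t \<in> S \<Longrightarrow> poly q2 t \<noteq> 0 \<and> g t = poly p2 t / poly q2 t"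
    using assms(2) unfolding rational_on_def by blast
  have "poly (q1 * q2) t \<noteq> 0 \<and> f t + g t = poly (p1 * q2 + p2 * q1) t / poly (q1 * q2) t" if "t \<in> S" for t
    using 1[OF that] 2[OF that] by (simp add: field_simps)
  then show ?thesis unfolding rational_on_def by blast
qed

lemma rat_mult:
  assumes "rational_on S f" "rational_on S g"
  shows "rational_on S (\<lambda>t. f t * g t)"
proof -
  obtain p1 q1 where 1: "\<And>t. t \<in> S \<Longrightarrow> poly q1 t \<noteq> 0 \<and> f t = poly p1 t / poly q1 t"
    using assms(1) unfolding rational_on_def by blast
  obtain p2 q2 where 2: "\<And>t. t \<in> S \<Longrightarrow> poly q2 t \<noteq> 0 \<and> g t = poly p2 t / poly q2 t"
    using assms(2) unfolding rational_on_def by blast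
  have "poly (q1 * q2) t \<noteq> 0 \<and> f t * g t = poly (p1 * p2) t / poly (q1 * q2) t" if "t \<in> S" for t
    using 1[OF that] 2[OF that] by (simp add: field_simps)
  then show ?thesis unfolding rational_on_def by blast
qed

lemma rat_sum:
  assumes "finite I" "\<And>i. i \<in> I \<Longrightarrow> rational_on S (f i)"
  shows "rational_on S (\<lambda>t. \<Sum>i\<in>I. f i t)"
  using assms
proof (induction I rule: finite_induct)
  case empty
  then show ?case using rat_const[of S 0] by simp
next
  case (insert x F)
  have "rational_on S (\<lambda>t. f x t + (\<Sum>i\<in>F. f i t))"
    by (rule rat_add) (use insert in auto)
  then show ?case using insert by simp
qed

lemma rat_prod:
  assumes "finite I" "\<And>i. i \<in> I \<Longrightarrow> rational_on S (f i)"
  shows "rational_on S (\<lambda>t. \<Prod>i\<in>I. f i t)"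
  using assms
proof (induction I rule: finite_induct)
  case empty
  then show ?case using rat_const[of S 1] by simp
next
  case (insert x F)
  have "rational_on S (\<lambda>t. f x t * (\<Prod>i\<in>F. f i t))"
    by (rule rat_mult) (use insert in auto)
  then show ?case using insert by simp
qed

lemma rat_hol:
  assumes "open S" "rational_on S f"
  shows "f holomorphic_on S"
proof -
  obtain p q where pq: "\<And>t. t \<in> S \<Longrightarrow> poly q t \<noteq> 0 \<and> f t = poly p t / poly q t"
    using assms(2) unfolding rational_on_def by blast
  have "(\<lambda>t. poly p t / poly q t) holomorphic_on S"
    using pq by (auto intro!: holomorphic_intros)
  then show ?thesis by (rule holomorphic_transform) (use pq in auto)
qed

lemma rat_deriv:
  assumes S: "open S" and f: "rational_on S f"
  shows "rational_on S (deriv f)"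
proof -
  obtain p q where pq: "\<And>t. t \<in> S \<Longrightarrow> poly q t \<noteq> 0 \<and> f t = poly p t / poly q t"
    using f unfolding rational_on_def by blast
  have "poly (q * q) t \<noteq> 0 \<and> deriv f t = poly (pderiv p * q - p * pderiv q) t / poly (q * q) t"
    if t: "t \<in> S" for t
  proof -
    have "((\<lambda>x. poly p x / poly q x) has_field_derivative
           (poly (pderiv p) t * poly q t - poly p t * poly (pderiv q) t) / (poly q t * poly q t)) (at t)"
      by (rule DERIV_divide[OF poly_DERIV poly_DERIV]) (use pq[OF t] in auto)
    then have "(f has_field_derivative
           (poly (pderiv p) t * poly q t - poly p t * poly (pderiv q) t) / (poly q t * poly q t)) (at t)"
      by (rule has_field_derivative_transform_within_open[OF _ S t]) (use pq in auto)
    then have "deriv f t = (poly (pderiv p) t * poly q t - poly p t * poly (pderiv q) t) / (poly q t * poly q t)"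
      by (rule DERIV_imp_deriv)
    then show ?thesis using pq[OF t] by simp
  qed
  then show ?thesis unfolding rational_on_def by blast
qed

lemma conn_nth: "conn A w t $ i = deriv (\<lambda>s. w s $ i) t + (\<Sum>j\<in>UNIV. A t $ i $ j * w t $ j)"
  by (simp add: conn_def matrix_vector_mult_def)

lemma rat_conn:
  assumes S: "open S" and A: "rational_mat_on S A" and w: "rational_vec_on S w"
  shows "rational_vec_on S (conn A w)"
  unfolding rational_vec_on_def
proof
  fix i
  have "rational_on S (\<lambda>t. deriv (\<lambda>s. w s $ i) t + (\<Sum>j\<in>UNIV. A t $ i $ j * w t $ j))"
  proof (rule rat_add)
    show "rational_on S (\<lambda>t. deriv (\<lambda>s. w s $ i) t)"
      using rat_deriv[OF S, of "\<lambda>s. w s $ i"] w unfolding rational_vec_on_def by simp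
    show "rational_on S (\<lambda>t. \<Sum>j\<in>UNIV. A t $ i $ j * w t $ j)"
      by (rule rat_sum) (use A w in \<open>auto simp: rational_mat_on_def rational_vec_on_def intro!: rat_mult\<close>)
  qed
  then show "rational_on S (\<lambda>t. conn A w t $ i)" by (simp add: conn_nth)
qed

lemma rat_iter:
  assumes S: "open S" and A: "rational_mat_on S A" and w: "rational_vec_on S w"
  shows "rational_vec_on S ((conn A ^^ m) w)"
  by (induction m) (use w rat_conn[OF S A] in auto)

lemma rat_det:
  fixes M :: "complex \<Rightarrow> complex^'n^'n"
  assumes "\<And>i j. rational_on S (\<lambda>t. M t $ i $ j)"
  shows "rational_on S (\<lambda>t. det (M t))"
  unfolding det_def
  by (intro rat_sum rat_mult rat_prod rat_const) (auto intro: assms)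


lemma transpose_mv_nth: "(transpose M *v v) $ i = (\<Sum>j\<in>UNIV. M $ j $ i * v $ j)"
  by (simp add: transpose_def matrix_vector_mult_def)

locale cs =
  fixes A :: "complex \<Rightarrow> complex^'n^'n" and C :: "complex set" and \<omega> :: "complex \<Rightarrow> complex^'n"
  assumes finC: "finite C" and ratA: "rational_mat_on (-C) A" and ratw: "rational_vec_on (-C) \<omega>"
begin

definition u where "u m = (conn A ^^ m) \<omega>"

abbreviation dflat where "dflat W \<psi> \<equiv> solves (\<lambda>t. transpose (A t)) W \<psi>"

definition ann where "ann W \<psi> \<longleftrightarrow> (\<forall>t\<in>W. pair (\<psi> t) (\<omega> t) = 0)"

definition good where "good R \<longleftrightarrow> open R \<and> convex R \<and> R \<noteq> {} \<and> R \<subseteq> -C \<and>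
   (\<forall>t1\<in>R. \<forall>c. \<exists>\<psi>. dflat R \<psi> \<and> \<psi> t1 = c)"

lemma openU: "open (-C)"
  using finC by (simp add: finite_imp_closed open_Compl)

lemma connU: "connected (-C)"
proof -
  have "path_connected (-C)"
    by (rule path_connected_complement_countable) (use finC in \<open>auto simp: countable_finite\<close>)
  then show ?thesis by (rule path_connected_imp_connected)
qed

lemma holA: "(\<lambda>t. A t $ i $ j) holomorphic_on -C"
  using ratA openU rat_hol unfolding rational_mat_on_def by blast

lemma holAT: "(\<lambda>t. transpose (A t) $ i $ j) holomorphic_on W" if "W \<subseteq> -C"
  using holomorphic_on_subset[OF holA[of j i] that] by (simp add: transpose_def)

lemma u0: "u 0 = \<omega>" by (simp add: u_def)
lemma uSuc: "u (Suc m) = conn A (u m)" by (simp add: u_def)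

lemma ratu: "rational_vec_on (-C) (u m)"
  unfolding u_def by (rule rat_iter[OF openU ratA ratw])

lemma holu: "(\<lambda>t. u m t $ i) holomorphic_on W" if "W \<subseteq> -C"
  using ratu[of m] rat_hol[OF openU] holomorphic_on_subset[OF _ that] unfolding rational_vec_on_def by blast

lemma holw: "(\<lambda>t. \<omega> t $ i) holomorphic_on W" if "W \<subseteq> -C"
  using holu[OF that, of 0] by (simp add: u0)

lemma good_ball: "t0 \<in> -C \<Longrightarrow> \<exists>r>0. good (ball t0 r)"
  using ode_exists[OF openU holAT[OF order_refl], of t0] unfolding good_def by auto

lemma good_shrink:
  assumes "good (ball t0 r)" "0 < r'" "r' \<le> r"
  shows "good (ball t0 r')"
proof -
  have sub: "ball t0 r' \<subseteq> ball t0 r" using assms by auto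
  show ?thesis unfolding good_def
  proof (intro conjI ballI allI)
    show "ball t0 r' \<subseteq> -C" using sub assms(1) unfolding good_def by blast
    show "ball t0 r' \<noteq> {}" using assms by auto
    fix t1 c assume "t1 \<in> ball t0 r'"
    then obtain \<psi> where "dflat (ball t0 r) \<psi>" "\<psi> t1 = c" using assms(1) sub unfolding good_def by blast
    then show "\<exists>\<psi>. dflat (ball t0 r') \<psi> \<and> \<psi> t1 = c" using solves_mono[OF _ sub] by blast
  qed auto
qed

lemma dflat_unique:
  assumes "open W" "connected W" "W \<subseteq> -C" "dflat W \<psi>" "t1 \<in> W" "\<psi> t1 = 0" "t \<in> W"
  shows "\<psi> t = 0"
  by (rule ode_unique[OF assms(1,2) holAT[OF assms(3)] assms(4-7)])

lemma dflat_unique2: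
  assumes "open W" "connected W" "W \<subseteq> -C" "dflat W \<psi>" "dflat W \<phi>" "t1 \<in> W" "\<psi> t1 = \<phi> t1" "t \<in> W"
  shows "\<psi> t = \<phi> t"
  using dflat_unique[OF assms(1-3) solves_diff[OF assms(4,5)] assms(6) _ assms(8)] assms(7) by simp

lemma pair_deriv:
  assumes sol: "dflat W \<psi>" and W: "open W" and t: "t \<in> W"
    and hw: "\<And>i. (\<lambda>s. w s $ i) holomorphic_on W"
  shows "((\<lambda>s. pair (\<psi> s) (w s)) has_field_derivative pair (\<psi> t) (conn A w t)) (at t)"
proof -
  have d1: "((\<lambda>s. \<psi> s $ i) has_field_derivative (\<Sum>j\<in>UNIV. A t $ j $ i * \<psi> t $ j)) (at t)" for i
    using sol t unfolding solves_def transpose_mv_nth by blast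
  have d2: "((\<lambda>s. w s $ i) has_field_derivative deriv (\<lambda>s. w s $ i) t) (at t)" for i
    using holomorphic_derivI[OF hw[of i] W t, of UNIV] by simp
  have "((\<lambda>s. \<Sum>i\<in>UNIV. \<psi> s $ i * w s $ i) has_field_derivative
     (\<Sum>i\<in>UNIV. (\<Sum>j\<in>UNIV. A t $ j $ i * \<psi> t $ j) * w t $ i + deriv (\<lambda>s. w s $ i) t * \<psi> t $ i)) (at t)"
    by (rule DERIV_sum) (rule DERIV_mult[OF d1 d2])
  moreover have "(\<Sum>i\<in>UNIV. (\<Sum>j\<in>UNIV. A t $ j $ i * \<psi> t $ j) * w t $ i + deriv (\<lambda>s. w s $ i) t * \<psi> t $ i)
      = pair (\<psi> t) (conn A w t)"
  proof -
    have "(\<Sum>i\<in>UNIV. (\<Sum>j\<in>UNIV. A t $ j $ i * \<psi> t $ j) * w t $ i) =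
          (\<Sum>i\<in>UNIV. \<Sum>j\<in>UNIV. A t $ j $ i * \<psi> t $ j * w t $ i)"
      by (simp add: sum_distrib_right)
    also have "\<dots> = (\<Sum>j\<in>UNIV. \<Sum>i\<in>UNIV. A t $ j $ i * \<psi> t $ j * w t $ i)"
      by (rule sum.swap)
    also have "\<dots> = (\<Sum>j\<in>UNIV. \<psi> t $ j * (\<Sum>i\<in>UNIV. A t $ j $ i * w t $ i))"
      by (simp add: sum_distrib_left mult_ac)
    finally have "(\<Sum>i\<in>UNIV. (\<Sum>j\<in>UNIV. A t $ j $ i * \<psi> t $ j) * w t $ i) =
        (\<Sum>j\<in>UNIV. \<psi> t $ j * (\<Sum>i\<in>UNIV. A t $ j $ i * w t $ i))" .
    then show ?thesis
      by (simp add: pair_def conn_nth sum.distrib distrib_left mult.commute)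
  qed
  moreover have "(\<lambda>s. pair (\<psi> s) (w s)) = (\<lambda>s. \<Sum>i\<in>UNIV. \<psi> s $ i * w s $ i)"
    by (simp add: pair_def)
  ultimately show ?thesis by simp
qed

lemma pair_holo:
  assumes sol: "dflat W \<psi>" and W: "open W" and hw: "\<And>i. (\<lambda>s. w s $ i) holomorphic_on W"
  shows "(\<lambda>s. pair (\<psi> s) (w s)) holomorphic_on W"
  unfolding pair_def using solves_holo[OF sol W] hw by (auto intro!: holomorphic_intros)

lemma ann_of_derivs:
  assumes W: "open W" "connected W" "W \<subseteq> -C" and sol: "dflat W \<psi>" and b: "b \<in> W"
    and z: "\<And>k. pair (\<psi> b) (u k b) = 0"
  shows "ann W \<psi>"
proof -
  define g where "g s = pair (\<psi> s) (\<omega> s)" for s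
  have dk: "\<forall>t\<in>W. (deriv ^^ k) g t = pair (\<psi> t) (u k t)" for k
  proof (induction k)
    case 0
    then show ?case by (simp add: g_def u0)
  next
    case (Suc k)
    show ?case
    proof
      fix t assume t: "t \<in> W"
      have "(deriv ^^ Suc k) g t = deriv ((deriv ^^ k) g) t" by simp
      also have "\<dots> = deriv (\<lambda>s. pair (\<psi> s) (u k s)) t"
      proof (rule deriv_cong_ev)
        show "\<forall>\<^sub>F x in nhds t. (deriv ^^ k) g x = pair (\<psi> x) (u k x)"
          using eventually_nhds_in_open[OF W(1) t] Suc by (auto elim!: eventually_mono)
      qed simp
      also have "\<dots> = pair (\<psi> t) (conn A (u k) t)"
        by (rule DERIV_imp_deriv[OF pair_deriv[OF sol W(1) t holu[OF W(3)]]])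
      finally show "(deriv ^^ Suc k) g t = pair (\<psi> t) (u (Suc k) t)" by (simp add: uSuc)
    qed
  qed
  have hg: "g holomorphic_on W" unfolding g_def by (rule pair_holo[OF sol W(1) holw[OF W(3)]])
  show ?thesis unfolding ann_def
  proof
    fix t assume t: "t \<in> W"
    have "g t = 0"
      by (rule holomorphic_fun_eq_0_on_connected[OF hg W(1,2) _ b t]) (use dk b z in auto)
    then show "pair (\<psi> t) (\<omega> t) = 0" by (simp add: g_def)
  qed
qed

lemma ann_mono: "ann W \<psi> \<Longrightarrow> W' \<subseteq> W \<Longrightarrow> ann W' \<psi>"
  unfolding ann_def by blast

lemma ext_good:
  assumes R: "good R" and p: "p \<in> R" and d: "\<delta> > 0" "ball p \<delta> \<subseteq> -C"
    and sol: "dflat (ball p \<delta>) \<psi>" and an: "ann (ball p \<delta>) \<psi>"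
  shows "\<exists>\<phi>. dflat R \<phi> \<and> ann R \<phi> \<and> \<phi> p = \<psi> p"
proof -
  have Ro: "open R" "convex R" "R \<subseteq> -C" using R unfolding good_def by auto
  obtain \<phi> where \<phi>: "dflat R \<phi>" "\<phi> p = \<psi> p" using R p unfolding good_def by blast
  define W where "W = ball p \<delta> \<inter> R"
  have W: "open W" "convex W" "W \<subseteq> -C" "p \<in> W" using Ro d p by (auto simp: W_def intro: convex_Int)
  have eq: "\<phi> t = \<psi> t" if "t \<in> W" for t
    by (rule dflat_unique2[OF W(1) convex_connected[OF W(2)] W(3) solves_mono[OF \<phi>(1)]
          solves_mono[OF sol] W(4) \<phi>(2) that]) (auto simp: W_def)
  have "ann R \<phi>" unfolding ann_def
  proof
    fix t assume t: "t \<in> R"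
    have "(\<lambda>s. pair (\<phi> s) (\<omega> s)) t = (\<lambda>s. 0) t"
    proof (rule analytic_continuation_open[where s=W and s'=R and f="\<lambda>s. pair (\<phi> s) (\<omega> s)" and g="\<lambda>s. 0"])
      show "(\<lambda>s. pair (\<phi> s) (\<omega> s)) holomorphic_on R"
        by (rule pair_holo[OF \<phi>(1) Ro(1) holw[OF Ro(3)]])
      show "pair (\<phi> z) (\<omega> z) = 0" if "z \<in> W" for z
        using eq[OF that] an that unfolding ann_def W_def by auto
      show "W \<noteq> {}" using W(4) by blast
      show "W \<subseteq> R" by (auto simp: W_def)
    qed (use W Ro t convex_connected in auto)
    then show "pair (\<phi> t) (\<omega> t) = 0" by simp
  qed
  with \<phi> show ?thesis by blast
qed

definition Eprop where "Eprop t \<longleftrightarrow> (\<exists>\<delta>>0. \<exists>\<psi>. ball t \<delta> \<subseteq> -C \<and> dflat (ball t \<delta>) \<psi> \<and> ann (ball t \<delta>) \<psi> \<and> \<psi> t \<noteq> 0)"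

lemma Eprop_good:
  assumes R: "good R" and x: "x \<in> R" and y: "y \<in> R" and E: "Eprop x"
  shows "Eprop y"
proof -
  have Ro: "open R" "convex R" "R \<subseteq> -C" using R unfolding good_def by auto
  obtain \<delta> \<psi> where d: "\<delta> > 0" "ball x \<delta> \<subseteq> -C" "dflat (ball x \<delta>) \<psi>" "ann (ball x \<delta>) \<psi>" "\<psi> x \<noteq> 0"
    using E unfolding Eprop_def by blast
  obtain \<phi> where \<phi>: "dflat R \<phi>" "ann R \<phi>" "\<phi> x = \<psi> x"
    using ext_good[OF R x d(1-4)] by blast
  have "\<phi> y \<noteq> 0"
  proof
    assume "\<phi> y = 0"
    then have "\<phi> x = 0" by (rule dflat_unique[OF Ro(1) convex_connected[OF Ro(2)] Ro(3) \<phi>(1) y _ x])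
    with \<phi>(3) d(5) show False by simp
  qed
  have "\<exists>e>0. ball y e \<subseteq> R" using Ro(1) y unfolding open_contains_ball by (rule bspec)
  then obtain e where e: "e > 0" "ball y e \<subseteq> R" by blast
  have "ball y e \<subseteq> -C" using e Ro by blast
  moreover have "dflat (ball y e) \<phi>" by (rule solves_mono[OF \<phi>(1) e(2)])
  moreover have "ann (ball y e) \<phi>" by (rule ann_mono[OF \<phi>(2) e(2)])
  ultimately show ?thesis unfolding Eprop_def using e(1) \<open>\<phi> y \<noteq> 0\<close> by blast
qed

lemma Eprop_everywhere:
  assumes E: "Eprop b" and b: "b \<in> -C" and b': "b' \<in> -C"
  shows "Eprop b'"
proof (rule connected_induction_simple[where P=Eprop, OF connU b b' E])
  fix a assume a: "a \<in> -C"
  obtain r where r: "r > 0" "good (ball a r)" using good_ball[OF a] by blast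
  have "ball a r \<subseteq> -C" using r unfolding good_def by blast
  then have "openin (top_of_set (-C)) (ball a r)"
    using openin_open_Int[of "ball a r" "-C"] by (simp add: Int_absorb1)
  moreover have "\<forall>x\<in>ball a r. \<forall>y\<in>ball a r. Eprop x \<longrightarrow> Eprop y"
    using Eprop_good[OF r(2)] by blast
  ultimately show "\<exists>T. openin (top_of_set (-C)) T \<and> a \<in> T \<and> (\<forall>x\<in>T. \<forall>y\<in>T. Eprop x \<longrightarrow> Eprop y)"
    using r(1) by (intro exI[of _ "ball a r"]) auto
qed

end


context cs begin

definition Qprop where "Qprop g Y s \<longleftrightarrow> (\<forall>\<delta> \<psi>. \<delta> > 0 \<longrightarrow> ball (g s) \<delta> \<subseteq> -C \<longrightarrow>
   dflat (ball (g s) \<delta>) \<psi> \<longrightarrow> ann (ball (g s) \<delta>) \<psi> \<longrightarrow> pair (\<psi> (g s)) (Y s) = 0)"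

lemma loop_prop:
  assumes g: "path g" "path_image g \<subseteq> -C" and fa: "flat_along A C g Y" and Q0: "Qprop g Y 0"
  shows "Qprop g Y 1"
proof (rule connected_induction_simple[where P="Qprop g Y" and S="{0..1}", OF connected_Icc _ _ Q0])
  show "(0::real) \<in> {0..1}" "(1::real) \<in> {0..1}" by auto
  fix a :: real assume a: "a \<in> {0..1}"
  have "\<exists>e>0. ball (g a) e \<subseteq> - C \<and>
        (\<exists>y. flat_on A (ball (g a) e) y \<and>
             (\<exists>d>0. \<forall>s'\<in>{0..1}. \<bar>s' - a\<bar> < d \<longrightarrow> g s' \<in> ball (g a) e \<and> Y s' = y (g s')))"
    using fa a unfolding flat_along_def by (rule bspec)
  then obtain e y d where e: "e > 0" "ball (g a) e \<subseteq> -C" and fl: "flat_on A (ball (g a) e) y"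
    and d: "d > 0" and dY: "\<And>s'. s' \<in> {0..1} \<Longrightarrow> \<bar>s' - a\<bar> < d \<Longrightarrow> g s' \<in> ball (g a) e \<and> Y s' = y (g s')"
    by blast
  have ga: "g a \<in> -C" using g(2) a unfolding path_image_def by (meson image_subset_iff)
  obtain r where r: "r > 0" "good (ball (g a) r)" using good_ball[OF ga] by blast
  define \<rho> where "\<rho> = min r e"
  have \<rho>: "\<rho> > 0" using r e by (simp add: \<rho>_def)
  have R: "good (ball (g a) \<rho>)" by (rule good_shrink[OF r(2) \<rho>]) (simp add: \<rho>_def)
  have Rsub: "ball (g a) \<rho> \<subseteq> ball (g a) e" by (auto simp: \<rho>_def)
  have Ro: "open (ball (g a) \<rho>)" "convex (ball (g a) \<rho>)" "ball (g a) \<rho> \<subseteq> -C"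
    using R unfolding good_def by auto
  have gaR: "g a \<in> ball (g a) \<rho>" using \<rho> by simp
  have cont: "continuous_on {0..1} g" using g(1) unfolding path_def .
  have "\<forall>\<epsilon>>0. \<exists>\<delta>>0. \<forall>x'\<in>{0..1}. dist x' a < \<delta> \<longrightarrow> dist (g x') (g a) < \<epsilon>"
    using cont a unfolding continuous_on_iff by (rule bspec)
  then obtain d' where d': "d' > 0" "\<And>x'. x' \<in> {0..1} \<Longrightarrow> dist x' a < d' \<Longrightarrow> dist (g x') (g a) < \<rho>"
    using \<rho> by blast
  define T where "T = {0..1} \<inter> ball a (min d d')"
  have Topen: "openin (top_of_set {0..1}) T" unfolding T_def by (rule openin_open_Int) simp
  have aT: "a \<in> T" using a d d' by (simp add: T_def)
  have Tp: "g x \<in> ball (g a) \<rho> \<and> Y x = y (g x)" if "x \<in> T" for x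
  proof -
    have x: "x \<in> {0..1}" "dist x a < d" "dist x a < d'" using that by (auto simp: T_def dist_commute)
    have "dist (g x) (g a) < \<rho>" by (rule d'(2)[OF x(1) x(3)])
    moreover have "Y x = y (g x)" using dY[OF x(1)] x(2) by (simp add: dist_real_def)
    ultimately show ?thesis by (simp add: dist_commute)
  qed
  have Ya: "Y a = y (g a)" using Tp[OF aT] by simp
  have hy: "\<And>i. (\<lambda>s. y s $ i) holomorphic_on ball (g a) \<rho>"
    using fl Rsub holomorphic_on_subset unfolding flat_on_def by blast
  have cy: "conn A y t = 0" if "t \<in> ball (g a) \<rho>" for t
    using fl Rsub that unfolding flat_on_def by blast
  have const: "pair (\<phi> x) (y x) = pair (\<phi> z) (y z)"
    if \<phi>: "dflat (ball (g a) \<rho>) \<phi>" and x: "x \<in> ball (g a) \<rho>" and z: "z \<in> ball (g a) \<rho>" for \<phi> x z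
  proof -
    have "\<exists>\<kappa>. \<forall>t\<in>ball (g a) \<rho>. pair (\<phi> t) (y t) = \<kappa>"
    proof (rule has_field_derivative_zero_constant[OF Ro(2)])
      fix t assume t: "t \<in> ball (g a) \<rho>"
      have "((\<lambda>s. pair (\<phi> s) (y s)) has_field_derivative pair (\<phi> t) (conn A y t)) (at t)"
        by (rule pair_deriv[OF \<phi> Ro(1) t hy])
      then show "((\<lambda>s. pair (\<phi> s) (y s)) has_field_derivative 0) (at t within ball (g a) \<rho>)"
        using cy[OF t] by (simp add: has_field_derivative_at_within)
    qed
    then show ?thesis using x z by force
  qed
  have equiv: "Qprop g Y x \<longleftrightarrow> Qprop g Y a" if x: "x \<in> T" for x
  proof
    assume Qa: "Qprop g Y a"
    show "Qprop g Y x" unfolding Qprop_def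
    proof (intro allI impI)
      fix \<delta> \<psi> assume h: "\<delta> > 0" "ball (g x) \<delta> \<subseteq> -C" "dflat (ball (g x) \<delta>) \<psi>" "ann (ball (g x) \<delta>) \<psi>"
      have gx: "g x \<in> ball (g a) \<rho>" using Tp[OF x] by simp
      obtain \<phi> where \<phi>: "dflat (ball (g a) \<rho>) \<phi>" "ann (ball (g a) \<rho>) \<phi>" "\<phi> (g x) = \<psi> (g x)"
        using ext_good[OF R gx h] by blast
      have "pair (\<psi> (g x)) (Y x) = pair (\<phi> (g x)) (y (g x))" using Tp[OF x] \<phi>(3) by simp
      also have "\<dots> = pair (\<phi> (g a)) (y (g a))" by (rule const[OF \<phi>(1) gx gaR])
      also have "\<dots> = pair (\<phi> (g a)) (Y a)" by (simp add: Ya)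
      also have "\<dots> = 0" using Qa \<rho> Ro(3) \<phi>(1,2) unfolding Qprop_def by blast
      finally show "pair (\<psi> (g x)) (Y x) = 0" .
    qed
  next
    assume Qx: "Qprop g Y x"
    show "Qprop g Y a" unfolding Qprop_def
    proof (intro allI impI)
      fix \<delta> \<psi> assume h: "\<delta> > 0" "ball (g a) \<delta> \<subseteq> -C" "dflat (ball (g a) \<delta>) \<psi>" "ann (ball (g a) \<delta>) \<psi>"
      have gx: "g x \<in> ball (g a) \<rho>" using Tp[OF x] by simp
      obtain \<phi> where \<phi>: "dflat (ball (g a) \<rho>) \<phi>" "ann (ball (g a) \<rho>) \<phi>" "\<phi> (g a) = \<psi> (g a)"
        using ext_good[OF R gaR h] by blast
      have "\<exists>e'>0. ball (g x) e' \<subseteq> ball (g a) \<rho>" using Ro(1) gx unfolding open_contains_ball by (rule bspec)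
      then obtain e' where e': "e' > 0" "ball (g x) e' \<subseteq> ball (g a) \<rho>" by blast
      have "pair (\<phi> (g x)) (Y x) = 0"
        using Qx e'(1) order_trans[OF e'(2) Ro(3)] solves_mono[OF \<phi>(1) e'(2)] ann_mono[OF \<phi>(2) e'(2)]
        unfolding Qprop_def by blast
      have "pair (\<psi> (g a)) (Y a) = pair (\<phi> (g a)) (y (g a))" using Ya \<phi>(3) by simp
      also have "\<dots> = pair (\<phi> (g x)) (y (g x))" by (rule const[OF \<phi>(1) gaR gx])
      also have "\<dots> = pair (\<phi> (g x)) (Y x)" using Tp[OF x] by simp
      also have "\<dots> = 0" by fact
      finally show "pair (\<psi> (g a)) (Y a) = 0" .
    qed
  qed
  show "\<exists>T. openin (top_of_set {0..1}) T \<and> a \<in> T \<and> (\<forall>x\<in>T. \<forall>z\<in>T. Qprop g Y x \<longrightarrow> Qprop g Y z)"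
    using Topen aT equiv by blast
qed

end


lemma pair_add_left: "pair (c + d) v = pair c v + pair d v"
  by (simp add: pair_def algebra_simps sum.distrib)
lemma pair_scale_left: "pair (a *s c) v = a * pair c v"
  by (simp add: pair_def algebra_simps sum_distrib_left)

context cs begin

lemma part1:
  assumes irr: "irreducible_conn A C" and nz: "\<exists>t. t \<notin> C \<and> \<omega> t \<noteq> 0" and b: "b \<notin> C"
  shows "vec.span {u i b | i. True} = UNIV"
proof (rule ccontr)
  assume ne: "vec.span {u i b | i. True} \<noteq> UNIV"
  obtain c where c: "c \<noteq> 0" "\<forall>v\<in>vec.span {u i b | i. True}. pair c v = 0"
    using annihilator_exists[OF vec.subspace_span ne] by blast
  have cu: "pair c (u k b) = 0" for k
    using c(2) vec.span_base[of "u k b" "{u i b | i. True}"] by blast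
  have bC: "b \<in> -C" using b by simp
  obtain r where r: "r > 0" "good (ball b r)" using good_ball[OF bC] by blast
  have br: "b \<in> ball b r" using r by simp
  obtain \<psi> where \<psi>: "dflat (ball b r) \<psi>" "\<psi> b = c" using r(2) br unfolding good_def by blast
  have brC: "ball b r \<subseteq> -C" using r(2) unfolding good_def by blast
  have "ann (ball b r) \<psi>"
    by (rule ann_of_derivs[OF open_ball connected_ball brC \<psi>(1) br]) (use cu \<psi>(2) in simp)
  then have Eb: "Eprop b" unfolding Eprop_def using r(1) brC \<psi> c(1) by blast
  obtain b0 where b0: "b0 \<notin> C" "\<And>v. v \<noteq> 0 \<Longrightarrow> vec.span (monodromy_orbit A C b0 v) = UNIV"
    using irr unfolding irreducible_conn_def by blast
  have b0C: "b0 \<in> -C" using b0 by simp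
  have Eb0: "Eprop b0" by (rule Eprop_everywhere[OF Eb bC b0C])
  obtain r0 where r0: "r0 > 0" "good (ball b0 r0)" using good_ball[OF b0C] by blast
  have b0r: "b0 \<in> ball b0 r0" using r0 by simp
  have R0: "open (ball b0 r0)" "connected (ball b0 r0)" "ball b0 r0 \<subseteq> -C" 
    using r0(2) unfolding good_def by auto
  define K where "K = {\<phi> b0 | \<phi>. dflat (ball b0 r0) \<phi> \<and> ann (ball b0 r0) \<phi>}"
  define H where "H = {v. \<forall>k\<in>K. pair k v = 0}"
  have Ksub: "vec.subspace K" unfolding vec.subspace_def
  proof (intro conjI ballI allI)
    show "0 \<in> K" unfolding K_def
      by (rule CollectI, rule exI[of _ "\<lambda>t. 0"]) (auto simp: solves_zero ann_def)
    fix x y assume "x \<in> K" "y \<in> K"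
    then obtain \<phi>1 \<phi>2 where p: "x = \<phi>1 b0" "dflat (ball b0 r0) \<phi>1" "ann (ball b0 r0) \<phi>1"
      "y = \<phi>2 b0" "dflat (ball b0 r0) \<phi>2" "ann (ball b0 r0) \<phi>2" unfolding K_def by blast
    have "dflat (ball b0 r0) (\<lambda>t. \<phi>1 t + \<phi>2 t) \<and> ann (ball b0 r0) (\<lambda>t. \<phi>1 t + \<phi>2 t)"
      using solves_add[OF p(2) p(5)] p(3,6) by (simp add: ann_def pair_add_left)
    then show "x + y \<in> K" unfolding K_def using p(1,4)
      by (intro CollectI exI[of _ "\<lambda>t. \<phi>1 t + \<phi>2 t"]) simp
  next
    fix a x assume "x \<in> K"
    then obtain \<phi>1 where p: "x = \<phi>1 b0" "dflat (ball b0 r0) \<phi>1" "ann (ball b0 r0) \<phi>1"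
      unfolding K_def by blast
    have "dflat (ball b0 r0) (\<lambda>t. a *s \<phi>1 t) \<and> ann (ball b0 r0) (\<lambda>t. a *s \<phi>1 t)"
      using solves_scale[OF p(2)] p(3) by (simp add: ann_def pair_scale_left)
    then show "a *s x \<in> K" unfolding K_def using p(1)
      by (intro CollectI exI[of _ "\<lambda>t. a *s \<phi>1 t"]) simp
  qed
  have Hsub: "vec.subspace H" unfolding vec.subspace_def
  proof (intro conjI ballI allI)
    show "0 \<in> H" unfolding H_def by simp
    show "x + y \<in> H" if "x \<in> H" "y \<in> H" for x y
      using that unfolding H_def by (simp add: pair_add_right)
    show "a *s x \<in> H" if "x \<in> H" for a x
      using that unfolding H_def by (simp add: pair_scale_right)
  qed
  have Hne: "H \<noteq> UNIV"
  proof -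
    obtain \<delta> \<psi>0 where d: "\<delta> > 0" "ball b0 \<delta> \<subseteq> -C" "dflat (ball b0 \<delta>) \<psi>0" "ann (ball b0 \<delta>) \<psi>0" "\<psi>0 b0 \<noteq> 0"
      using Eb0 unfolding Eprop_def by blast
    obtain \<phi> where \<phi>: "dflat (ball b0 r0) \<phi>" "ann (ball b0 r0) \<phi>" "\<phi> b0 = \<psi>0 b0"
      using ext_good[OF r0(2) b0r d(1-4)] by blast
    have "\<phi> b0 \<in> K" unfolding K_def using \<phi> by blast
    moreover obtain v where "pair (\<phi> b0) v \<noteq> 0" using vec_nonzero_pair[of "\<phi> b0"] \<phi>(3) d(5) by auto
    ultimately have "v \<notin> H" unfolding H_def by blast
    then show ?thesis by blast
  qed
  have "\<exists>v\<in>H. v \<noteq> 0"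
  proof (cases "K = UNIV")
    case False
    obtain c' where c': "c' \<noteq> 0" "\<forall>k\<in>K. pair c' k = 0" using annihilator_exists[OF Ksub False] by blast
    have "pair k c' = 0" if "k \<in> K" for k
      using c'(2) that pair_commute[of k c'] by simp
    then have "c' \<in> H" unfolding H_def by blast
    with c'(1) show ?thesis by blast
  next
    case True
    have w0: "\<omega> t = 0" if t: "t \<in> ball b0 r0" for t
    proof (rule pair_eq_0_all)
      fix d
      obtain \<psi>d where \<psi>d: "dflat (ball b0 r0) \<psi>d" "\<psi>d t = d" using r0(2) t unfolding good_def by blast
      have "\<psi>d b0 \<in> K" using True by simp
      then obtain \<phi> where \<phi>0: "\<psi>d b0 = \<phi> b0" "dflat (ball b0 r0) \<phi>" "ann (ball b0 r0) \<phi>"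
        unfolding K_def by blast
      note \<phi> = \<phi>0(1)[symmetric] \<phi>0(2,3)
      have "\<phi> t = \<psi>d t" by (rule dflat_unique2[OF R0 \<phi>(2) \<psi>d(1) b0r \<phi>(1) t])
      then show "pair d (\<omega> t) = 0" using \<phi>(3) t \<psi>d(2) unfolding ann_def by auto
    qed
    obtain t where t: "t \<notin> C" "\<omega> t \<noteq> 0" using nz by blast
    have "\<omega> t $ i = 0" for i
    proof -
      have "(\<lambda>s. \<omega> s $ i) t = (\<lambda>s. 0) t"
      proof (rule analytic_continuation_open[where s="ball b0 r0" and s'="-C" and f="\<lambda>s. \<omega> s $ i" and g="\<lambda>s. 0"])
        show "(\<lambda>s. \<omega> s $ i) holomorphic_on -C" by (rule holw) simp
        show "ball b0 r0 \<noteq> {}" using b0r by blast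
        show "open (ball b0 r0)" by simp
        show "open (-C)" by (rule openU)
        show "connected (-C)" by (rule connU)
        show "ball b0 r0 \<subseteq> -C" by (rule R0(3))
        show "(\<lambda>s. 0) holomorphic_on -C" by simp
        show "\<omega> z $ i = 0" if "z \<in> ball b0 r0" for z using w0[OF that] by simp
        show "t \<in> -C" using t by simp
      qed
      then show ?thesis by simp
    qed
    then have "\<omega> t = 0" by (simp add: vec_eq_iff)
    with t show ?thesis by simp
  qed
  then obtain v where v: "v \<in> H" "v \<noteq> 0" by blast
  have orb: "monodromy_orbit A C b0 v \<subseteq> H"
  proof
    fix z assume "z \<in> monodromy_orbit A C b0 v"
    then obtain g Y where gY: "z = Y 1" "path g" "pathstart g = b0" "pathfinish g = b0"
      "path_image g \<subseteq> -C" "flat_along A C g Y" "Y 0 = v"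
      unfolding monodromy_orbit_def by blast
    have g0: "g 0 = b0" and g1: "g 1 = b0" using gY(3,4) by (simp_all add: pathstart_def pathfinish_def)
    have "Qprop g Y 0" unfolding Qprop_def
    proof (intro allI impI)
      fix \<delta> \<psi> assume h: "\<delta> > 0" "ball (g 0) \<delta> \<subseteq> -C" "dflat (ball (g 0) \<delta>) \<psi>" "ann (ball (g 0) \<delta>) \<psi>"
      have h': "ball b0 \<delta> \<subseteq> -C" "dflat (ball b0 \<delta>) \<psi>" "ann (ball b0 \<delta>) \<psi>"
        using h g0 by simp_all
      obtain \<phi> where \<phi>: "dflat (ball b0 r0) \<phi>" "ann (ball b0 r0) \<phi>" "\<phi> b0 = \<psi> b0"
        using ext_good[OF r0(2) b0r h(1) h'] by blast
      have "\<phi> b0 \<in> K" unfolding K_def using \<phi> by blast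
      then have "pair (\<phi> b0) v = 0" using v(1) unfolding H_def by blast
      then show "pair (\<psi> (g 0)) (Y 0) = 0" using \<phi>(3) g0 gY(7) by simp
    qed
    then have Q1: "Qprop g Y 1" by (rule loop_prop[OF gY(2,5,6)])
    have "pair k (Y 1) = 0" if kK: "k \<in> K" for k
    proof -
      obtain \<phi> where \<phi>: "k = \<phi> b0" "dflat (ball b0 r0) \<phi>" "ann (ball b0 r0) \<phi>"
        using kK unfolding K_def by blast
      have "pair (\<phi> (g 1)) (Y 1) = 0" using Q1 r0(1) R0(3) \<phi>(2,3) unfolding Qprop_def g1 by blast
      then show ?thesis using \<phi>(1) g1 by simp
    qed
    then show "z \<in> H" unfolding H_def using gY(1) by blast
  qed
  have "vec.span (monodromy_orbit A C b0 v) \<subseteq> H" by (rule vec.span_minimal[OF orb Hsub])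
  then show False using b0(2)[OF v(2)] Hne by blast
qed

end


lemma mv_cols: "(\<chi> r j. f j $ r) *v x = (\<Sum>j\<in>UNIV. x$j *s (f j :: complex^'n))"
  by (simp add: matrix_mult_sum column_def)

lemma det_cols_nz_span:
  fixes f :: "'n \<Rightarrow> complex^'n"
  assumes "det (\<chi> r j. f j $ r) \<noteq> 0"
  shows "vec.span (range f) = UNIV"
proof -
  have "y \<in> vec.span (range f)" for y
  proof -
    define M where "M = (\<chi> r j. f j $ r :: complex^'n^'n)"
    define x where "x = (\<chi> k. det(\<chi> i j. if j=k then y$i else M$i$j) / det M)"
    have "M *v x = y" using cramer[of M x y] assms by (simp add: M_def x_def)
    then have "y = (\<Sum>j\<in>UNIV. x$j *s f j)" by (simp add: M_def mv_cols)
    also have "\<dots> \<in> vec.span (range f)"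
      by (intro vec.span_sum vec.span_scale vec.span_base) auto
    finally show ?thesis .
  qed
  then show ?thesis by auto
qed

lemma det_cols_zero:
  fixes f :: "'n \<Rightarrow> complex^'n"
  assumes "det (\<chi> r j. f j $ r) = 0"
  shows "\<exists>x. x \<noteq> 0 \<and> (\<Sum>j\<in>UNIV. x$j *s f j) = 0"
proof -
  have "\<not> invertible (\<chi> r j. f j $ r :: complex^'n^'n)" using assms invertible_det_nz by blast
  then have "\<not> (\<forall>x. (\<chi> r j. f j $ r :: complex^'n^'n) *v x = 0 \<longrightarrow> x = 0)"
    using invertible_left_inverse matrix_left_invertible_ker by blast
  then show ?thesis by (auto simp: mv_cols)
qed

lemma det_cols_inj_nz:
  fixes f :: "'n \<Rightarrow> complex^'n"
  assumes "\<And>x. (\<Sum>j\<in>UNIV. x$j *s f j) = 0 \<Longrightarrow> x = 0"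
  shows "det (\<chi> r j. f j $ r) \<noteq> 0"
proof -
  have "\<forall>x. (\<chi> r j. f j $ r :: complex^'n^'n) *v x = 0 \<longrightarrow> x = 0" using assms by (simp add: mv_cols)
  then have "invertible (\<chi> r j. f j $ r :: complex^'n^'n)"
    using invertible_left_inverse matrix_left_invertible_ker by blast
  then show ?thesis using invertible_det_nz by blast
qed

lemma hol_det:
  fixes M :: "complex \<Rightarrow> complex^'n^'n"
  assumes "\<And>r j. (\<lambda>t. M t $ r $ j) holomorphic_on S"
  shows "(\<lambda>t. det (M t)) holomorphic_on S"
  unfolding det_def by (intro holomorphic_intros assms)


context cs begin

lemma loc:
  assumes t1: "t1 \<in> -C"
    and ind: "\<And>a. (\<Sum>i<k. a i *s u i t1) = 0 \<Longrightarrow> \<forall>i<k. a i = 0"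
    and dep: "\<And>t. t \<in> -C \<Longrightarrow> \<exists>a. (\<exists>i<Suc k. a i \<noteq> 0) \<and> (\<Sum>i<Suc k. a i *s u i t) = 0"
  shows "\<exists>\<rho>>0. ball t1 \<rho> \<subseteq> -C \<and> (\<exists>c. (\<forall>i<k. c i holomorphic_on ball t1 \<rho>) \<and>
           (\<forall>t\<in>ball t1 \<rho>. u k t = (\<Sum>i<k. c i t *s u i t)))"
proof -
  define v where "v i = u i t1" for i
  define S1 where "S1 = v ` {..<k}"
  have injv: "inj_on v {..<k}"
  proof (rule inj_onI)
    fix i j assume ij: "i \<in> {..<k}" "j \<in> {..<k}" "v i = v j"
    show "i = j"
    proof (rule ccontr)
      assume ne: "i \<noteq> j"
      define a where "a l = (if l = i then 1 else 0) - (if l = j then 1 else (0::complex))" for l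
      have "(\<Sum>l<k. a l *s u l t1) = (\<Sum>l<k. (if l = i then u l t1 else 0)) - (\<Sum>l<k. (if l = j then u l t1 else 0))"
      proof -
        have "a l *s u l t1 = (if l = i then u l t1 else 0) - (if l = j then u l t1 else 0)" for l
          using ne by (cases "l = i"; cases "l = j") (auto simp: a_def)
        then show ?thesis by (simp add: sum_subtractf)
      qed
      also have "\<dots> = v i - v j" using ij by (simp add: v_def)
      also have "\<dots> = 0" using ij by simp
      finally have "\<forall>l<k. a l = 0" by (rule ind)
      then have "a i = 0" using ij by simp
      then show False using ne by (simp add: a_def)
    qed
  qed
  have indS1: "vec.independent S1"
  proof -
    have "\<not> (\<exists>U. (\<exists>w\<in>S1. U w \<noteq> 0) \<and> (\<Sum>w\<in>S1. U w *s w) = 0)"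
    proof
      assume "\<exists>U. (\<exists>w\<in>S1. U w \<noteq> 0) \<and> (\<Sum>w\<in>S1. U w *s w) = 0"
      then obtain U where U: "\<exists>w\<in>S1. U w \<noteq> 0" "(\<Sum>w\<in>S1. U w *s w) = 0" by blast
      have "(\<Sum>i<k. U (v i) *s u i t1) = (\<Sum>w\<in>S1. U w *s w)"
        unfolding S1_def using sum.reindex[OF injv, of "\<lambda>w. U w *s w"] by (simp add: v_def)
      then have "\<forall>i<k. U (v i) = 0" using U(2) by (intro ind) simp
      then show False using U(1) unfolding S1_def by auto
    qed
    then show ?thesis using vec.dependent_finite[of S1] by (simp add: S1_def)
  qed
  define B' where "B' = vec.extend_basis S1"
  have SB: "S1 \<subseteq> B'" unfolding B'_def by (rule vec.extend_basis_superset[OF indS1])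
  have iB: "vec.independent B'" unfolding B'_def by (rule vec.independent_extend_basis[OF indS1])
  have sB: "vec.span B' = UNIV" unfolding B'_def by (rule vec.span_extend_basis[OF indS1])
  have fB: "finite B'" by (rule vec.finiteI_independent[OF iB])
  have cB: "card B' = CARD('n)"
  proof -
    have "card B' = vec.dim (UNIV :: (complex^'n) set)"
      by (rule vec.basis_card_eq_dim) (use iB sB in auto)
    then show ?thesis by (simp add: card_cart_basis)
  qed
  obtain \<sigma> where \<sigma>: "bij_betw \<sigma> (UNIV::'n set) B'"
    using finite_same_card_bij[of "UNIV::'n set" B'] fB cB by auto
  define idx where "idx = the_inv_into {..<k} v"
  have idx_v: "idx (v i) = i" if "i < k" for i
    unfolding idx_def using the_inv_into_f_f[OF injv] that by simp
  have v_idx: "v (idx w) = w" "idx w < k" if "w \<in> S1" for w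
    unfolding idx_def using f_the_inv_into_f[OF injv] that the_inv_into_into[OF injv, of w "{..<k}"]
    by (auto simp: S1_def)
  define col where "col j t = (if \<sigma> j \<in> S1 then u (idx (\<sigma> j)) t else \<sigma> j)" for j t
  define M where "M t = (\<chi> r j. col j t $ r :: complex^'n^'n)" for t
  have col1: "col j t1 = \<sigma> j" for j
    unfolding col_def using v_idx by (auto simp: v_def)
  have holM: "(\<lambda>t. M t $ r $ j) holomorphic_on -C" for r j
    by (cases "\<sigma> j \<in> S1") (auto simp: M_def col_def intro: holu)
  have Mx: "M t *v (\<chi> j. if \<sigma> j \<in> S1 then a (idx (\<sigma> j)) else 0) = (\<Sum>i<k. a i *s u i t)" for a t
  proof -
    define J where "J = {j. \<sigma> j \<in> S1}"
    have bijJ: "bij_betw (\<lambda>j. idx (\<sigma> j)) J {..<k}"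
    proof (rule bij_betw_trans[of \<sigma> J S1 idx, unfolded o_def])
      show "bij_betw \<sigma> J S1"
        by (rule bij_betw_subset[OF \<sigma>]) (use SB bij_betw_imp_surj_on[OF \<sigma>] in \<open>auto simp: J_def\<close>)
      have "bij_betw v {..<k} S1" unfolding S1_def using injv by (simp add: bij_betw_def)
      then show "bij_betw idx S1 {..<k}" unfolding idx_def by (rule bij_betw_the_inv_into)
    qed
    have "M t *v (\<chi> j. if \<sigma> j \<in> S1 then a (idx (\<sigma> j)) else 0) =
          (\<Sum>j\<in>UNIV. (if \<sigma> j \<in> S1 then a (idx (\<sigma> j)) else 0) *s col j t)"
      unfolding M_def mv_cols by simp
    also have "\<dots> = (\<Sum>j\<in>J. a (idx (\<sigma> j)) *s u (idx (\<sigma> j)) t)"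
      by (rule sum.mono_neutral_cong_right) (auto simp: J_def col_def)
    also have "\<dots> = (\<Sum>i<k. a i *s u i t)"
      by (rule sum.reindex_bij_betw[OF bijJ, of "\<lambda>i. a i *s u i t"])
    finally show ?thesis .
  qed
  have det1: "det (M t1) \<noteq> 0"
  proof -
    have "det (\<chi> r j. \<sigma> j $ r) \<noteq> 0"
    proof (rule det_cols_inj_nz)
      fix x :: "complex^'n" assume x: "(\<Sum>j\<in>UNIV. x$j *s \<sigma> j) = 0"
      define g where "g b = x $ (inv_into UNIV \<sigma> b)" for b
      have inj\<sigma>: "inj \<sigma>" using \<sigma> by (simp add: bij_betw_def)
      have "(\<Sum>b\<in>B'. g b *s b) = (\<Sum>j\<in>UNIV. g (\<sigma> j) *s \<sigma> j)"
        by (rule sum.reindex_bij_betw[OF \<sigma>, symmetric])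
      also have "\<dots> = 0" using x by (simp add: g_def inv_into_f_f[OF inj\<sigma>])
      finally have "(\<Sum>b\<in>B'. g b *s b) = 0" .
      then have "\<forall>b\<in>B'. g b = 0" using iB vec.dependent_finite[OF fB] by blast
      then have "x $ j = 0" for j
        using bij_betw_apply[OF \<sigma>, of j] by (auto simp: g_def inv_into_f_f[OF inj\<sigma>])
      then show "x = 0" by (simp add: vec_eq_iff)
    qed
    then show ?thesis by (simp add: M_def col1)
  qed
  have holD: "(\<lambda>t. det (M t)) holomorphic_on -C" by (rule hol_det[OF holM])
  have cD: "isCont (\<lambda>t. det (M t)) t1"
    using continuous_on_eq_continuous_at[OF openU] holomorphic_on_imp_continuous_on[OF holD] t1 by blast
  then obtain e1 where e1: "e1 > 0" "\<And>t. dist t1 t < e1 \<Longrightarrow> det (M t) \<noteq> 0"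
    using continuous_at_avoid[where f="\<lambda>t. det (M t)", OF cD det1] by blast
  have "\<exists>e>0. ball t1 e \<subseteq> -C" using openU t1 unfolding open_contains_ball by (rule bspec)
  then obtain e2 where e2: "e2 > 0" "ball t1 e2 \<subseteq> -C" by blast
  define \<rho> where "\<rho> = min e1 e2"
  define N where "N = ball t1 \<rho>"
  have \<rho>: "\<rho> > 0" using e1 e2 by (simp add: \<rho>_def)
  have NC: "N \<subseteq> -C" using e2 by (auto simp: N_def \<rho>_def)
  have detN: "det (M t) \<noteq> 0" if "t \<in> N" for t using e1 that by (auto simp: N_def \<rho>_def)
  define X where "X t = (\<chi> j. det(\<chi> r s. if s = j then u k t $ r else M t $ r $ s) / det (M t))" for t
  have MX: "M t *v X t = u k t" if "t \<in> N" for t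
    using cramer[OF detN[OF that], of "X t" "u k t"] by (simp add: X_def)
  define c where "c i t = X t $ (inv_into UNIV \<sigma> (v i))" for i t
  have holc: "c i holomorphic_on N" if "i < k" for i
  proof -
    have "(\<lambda>t. det(\<chi> r s. if s = j then u k t $ r else M t $ r $ s)) holomorphic_on N" for j
    proof (rule hol_det)
      fix r s show "(\<lambda>t. (\<chi> r s. if s = j then u k t $ r else M t $ r $ s) $ r $ s) holomorphic_on N"
        using holu[OF NC] holomorphic_on_subset[OF holM NC] by (cases "s = j") auto
    qed
    moreover have "(\<lambda>t. det (M t)) holomorphic_on N" by (rule holomorphic_on_subset[OF holD NC])
    ultimately show ?thesis unfolding c_def X_def using detN by (auto intro!: holomorphic_intros)
  qed
  have rep: "u k t = (\<Sum>i<k. c i t *s u i t)" if t: "t \<in> N" for t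
  proof -
    have tC: "t \<in> -C" using NC t by blast
    have indt: "\<forall>i<k. a i = 0" if "(\<Sum>i<k. a i *s u i t) = 0" for a
    proof -
      have "M t *v (\<chi> j. if \<sigma> j \<in> S1 then a (idx (\<sigma> j)) else 0) = 0" using that by (simp add: Mx)
      then have x0: "(\<chi> j. if \<sigma> j \<in> S1 then a (idx (\<sigma> j)) else 0) = 0"
        using detN[OF t] invertible_det_nz invertible_left_inverse matrix_left_invertible_ker by blast
      show ?thesis
      proof (intro allI impI)
        fix i assume i: "i < k"
        have vS: "v i \<in> S1" using i by (simp add: S1_def)
        then have "v i \<in> range \<sigma>" using SB bij_betw_imp_surj_on[OF \<sigma>] by blast
        then obtain j where j0: "v i = \<sigma> j" by blast
        note j = j0[symmetric]
        have "(\<chi> j. if \<sigma> j \<in> S1 then a (idx (\<sigma> j)) else 0) $ j = a i"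
          using j vS idx_v[OF i] by simp
        then show "a i = 0" using x0 by simp
      qed
    qed
    obtain a where a: "\<exists>i<Suc k. a i \<noteq> 0" "(\<Sum>i<Suc k. a i *s u i t) = 0" using dep[OF tC] by blast
    have ak: "a k \<noteq> 0"
    proof
      assume "a k = 0"
      then have "(\<Sum>i<k. a i *s u i t) = 0" using a(2) by simp
      then have "\<forall>i<k. a i = 0" by (rule indt)
      with a(1) \<open>a k = 0\<close> show False using less_Suc_eq by auto
    qed
    define \<beta> where "\<beta> i = - a i / a k" for i
    have uk: "u k t = (\<Sum>i<k. \<beta> i *s u i t)"
    proof -
      have s1: "a k *s u k t + (\<Sum>i<k. a i *s u i t) = 0" using a(2) by (simp add: add.commute)
      have s3: "a k *s u k t = - (\<Sum>i<k. a i *s u i t)"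
        using s1 by (simp add: eq_neg_iff_add_eq_0)
      have "a k *s (\<Sum>i<k. \<beta> i *s u i t) = (\<Sum>i<k. a k *s (\<beta> i *s u i t))"
        by (rule vec.scale_sum_right)
      also have "\<dots> = (\<Sum>i<k. (- a i) *s u i t)"
        by (rule sum.cong) (use ak in \<open>simp_all add: \<beta>_def vector_smult_assoc\<close>)
      also have "\<dots> = - (\<Sum>i<k. a i *s u i t)" by (simp add: sum_negf)
      finally have "a k *s (\<Sum>i<k. \<beta> i *s u i t) = a k *s u k t" using s3 by simp
      then show ?thesis using ak by simp
    qed
    have "M t *v (\<chi> j. if \<sigma> j \<in> S1 then \<beta> (idx (\<sigma> j)) else 0) = u k t" using uk by (simp add: Mx)
    then have "(\<chi> j. if \<sigma> j \<in> S1 then \<beta> (idx (\<sigma> j)) else 0) =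
        (\<chi> kk. det(\<chi> r s. if s = kk then u k t $ r else M t $ r $ s) / det (M t))"
      by (rule cramer[OF detN[OF t], THEN iffD1])
    then have Xe: "X t = (\<chi> j. if \<sigma> j \<in> S1 then \<beta> (idx (\<sigma> j)) else 0)"
      unfolding X_def by simp
    have ci: "c i t = \<beta> i" if i: "i < k" for i
    proof -
      have vS: "v i \<in> S1" using i by (simp add: S1_def)
      then have "\<sigma> (inv_into UNIV \<sigma> (v i)) = v i"
        using SB bij_betw_imp_surj_on[OF \<sigma>] by (auto intro: f_inv_into_f)
      then show ?thesis unfolding c_def Xe using vS idx_v[OF i] by simp
    qed
    show ?thesis using uk ci by simp
  qed
  show ?thesis using \<rho> NC holc rep unfolding N_def by blast
qed

end


lemma conn_local:
  assumes N: "open N" "t \<in> N" and eq: "\<And>s. s \<in> N \<Longrightarrow> w s = w' s"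
  shows "conn A w t = conn A w' t"
proof -
  have "deriv (\<lambda>s. w s $ i) t = deriv (\<lambda>s. w' s $ i) t" for i
    by (rule deriv_cong_ev) (use eventually_nhds_in_open[OF N] eq in \<open>auto elim!: eventually_mono\<close>)
  then show ?thesis using eq[OF N(2)] by (simp add: conn_def)
qed

context cs begin

definition hc where "hc N k w \<longleftrightarrow> (\<exists>c. (\<forall>i<k. c i holomorphic_on N) \<and> (\<forall>t\<in>N. w t = (\<Sum>i<k. c i t *s u i t)))"

lemma hc_cong: "hc N k w' \<Longrightarrow> (\<And>t. t \<in> N \<Longrightarrow> w t = w' t) \<Longrightarrow> hc N k w"
  unfolding hc_def by metis

lemma hc_u_lt:
  assumes "i < k" shows "hc N k (u i)"
  unfolding hc_def
proof (intro exI[of _ "\<lambda>l t. if l = i then 1 else 0"] conjI allI impI ballI)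
  fix t
  have "(\<Sum>l<k. (if l = i then 1 else 0) *s u l t) = (\<Sum>l<k. if l = i then u l t else 0)"
    by (rule sum.cong) auto
  also have "\<dots> = u i t" using assms by simp
  finally show "u i t = (\<Sum>l<k. (if l = i then 1 else 0) *s u l t)" by simp
qed auto

lemma hc_zero: "hc N k (\<lambda>t. 0)"
  unfolding hc_def by (intro exI[of _ "\<lambda>l t. 0"]) auto

lemma hc_add:
  assumes "hc N k w1" "hc N k w2" shows "hc N k (\<lambda>t. w1 t + w2 t)"
proof -
  obtain c1 where c1: "\<forall>i<k. c1 i holomorphic_on N" "\<forall>t\<in>N. w1 t = (\<Sum>i<k. c1 i t *s u i t)"
    using assms(1) unfolding hc_def by blast
  obtain c2 where c2: "\<forall>i<k. c2 i holomorphic_on N" "\<forall>t\<in>N. w2 t = (\<Sum>i<k. c2 i t *s u i t)"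
    using assms(2) unfolding hc_def by blast
  show ?thesis unfolding hc_def
  proof (intro exI[of _ "\<lambda>i t. c1 i t + c2 i t"] conjI allI impI ballI)
    show "(\<lambda>t. c1 i t + c2 i t) holomorphic_on N" if "i < k" for i
      using c1(1) c2(1) that by (auto intro: holomorphic_on_add)
    fix t assume "t \<in> N"
    then show "w1 t + w2 t = (\<Sum>i<k. (c1 i t + c2 i t) *s u i t)"
      using c1(2) c2(2) by (simp add: vec.scale_left_distrib sum.distrib)
  qed
qed

lemma hc_smult:
  assumes f: "f holomorphic_on N" and w: "hc N k w" shows "hc N k (\<lambda>t. f t *s w t)"
proof -
  obtain c where c: "\<forall>i<k. c i holomorphic_on N" "\<forall>t\<in>N. w t = (\<Sum>i<k. c i t *s u i t)"
    using w unfolding hc_def by blast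
  show ?thesis unfolding hc_def
  proof (intro exI[of _ "\<lambda>i t. f t * c i t"] conjI allI impI ballI)
    show "(\<lambda>t. f t * c i t) holomorphic_on N" if "i < k" for i
      using c(1) f that by (auto intro: holomorphic_on_mult)
    fix t assume "t \<in> N"
    then show "f t *s w t = (\<Sum>i<k. (f t * c i t) *s u i t)"
      using c(2) by (simp add: vec.scale_sum_right vector_smult_assoc)
  qed
qed

lemma hc_sum:
  assumes "finite I" "\<And>j. j \<in> I \<Longrightarrow> hc N k (w j)" shows "hc N k (\<lambda>t. \<Sum>j\<in>I. w j t)"
  using assms
proof (induction I rule: finite_induct)
  case empty
  then show ?case using hc_zero by simp
next
  case (insert x F)
  have "hc N k (\<lambda>t. w x t + (\<Sum>j\<in>F. w j t))" by (rule hc_add) (use insert in auto)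
  then show ?case using insert by simp
qed

lemma conn_comb:
  assumes N: "open N" "N \<subseteq> -C" and t: "t \<in> N" and hcs: "\<And>i. c i holomorphic_on N"
  shows "conn A (\<lambda>s. \<Sum>i<k. c i s *s u i s) t =
         (\<Sum>i<k. deriv (c i) t *s u i t) + (\<Sum>i<k. c i t *s u (Suc i) t)"
proof -
  have "conn A (\<lambda>s. \<Sum>i<k. c i s *s u i s) t $ r =
        ((\<Sum>i<k. deriv (c i) t *s u i t) + (\<Sum>i<k. c i t *s u (Suc i) t)) $ r" for r
  proof -
    have dc: "(c i has_field_derivative deriv (c i) t) (at t)" for i
      using holomorphic_derivI[OF hcs[of i] N(1) t, of UNIV] by simp
    have du: "((\<lambda>s. u i s $ r) has_field_derivative deriv (\<lambda>s. u i s $ r) t) (at t)" for i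
    proof -
      have "(\<lambda>s. u i s $ r) holomorphic_on N" by (rule holu[OF N(2)])
      from holomorphic_derivI[OF this N(1) t, of UNIV] show ?thesis by simp
    qed
    have "((\<lambda>s. \<Sum>i<k. c i s * u i s $ r) has_field_derivative
          (\<Sum>i<k. c i t * deriv (\<lambda>s. u i s $ r) t + deriv (c i) t * u i t $ r)) (at t)"
      by (rule DERIV_sum) (rule DERIV_mult'[OF dc du])
    then have D: "deriv (\<lambda>s. (\<Sum>i<k. c i s *s u i s) $ r) t =
          (\<Sum>i<k. c i t * deriv (\<lambda>s. u i s $ r) t + deriv (c i) t * u i t $ r)"
      by (simp add: DERIV_imp_deriv sum_component)
    have A: "(\<Sum>j\<in>UNIV. A t $ r $ j * (\<Sum>i<k. c i t *s u i t) $ j) =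
             (\<Sum>i<k. c i t * (\<Sum>j\<in>UNIV. A t $ r $ j * u i t $ j))"
      by (simp add: sum_component sum_distrib_left sum_distrib_right mult_ac sum.swap[of _ UNIV])
    have "conn A (\<lambda>s. \<Sum>i<k. c i s *s u i s) t $ r =
        (\<Sum>i<k. c i t * deriv (\<lambda>s. u i s $ r) t + deriv (c i) t * u i t $ r) +
        (\<Sum>i<k. c i t * (\<Sum>j\<in>UNIV. A t $ r $ j * u i t $ j))"
      unfolding conn_nth D A ..
    also have "\<dots> = (\<Sum>i<k. deriv (c i) t * u i t $ r) + (\<Sum>i<k. c i t * conn A (u i) t $ r)"
      by (simp add: conn_nth sum.distrib distrib_left algebra_simps)
    also have "\<dots> = ((\<Sum>i<k. deriv (c i) t *s u i t) + (\<Sum>i<k. c i t *s u (Suc i) t)) $ r"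
      by (simp add: sum_component uSuc)
    finally show ?thesis .
  qed
  then show ?thesis by (simp add: vec_eq_iff)
qed

lemma hc_conn:
  assumes N: "open N" "N \<subseteq> -C" and w: "hc N k w" and uk: "hc N k (u k)"
  shows "hc N k (conn A w)"
proof -
  obtain c where c: "\<forall>i<k. c i holomorphic_on N" "\<forall>t\<in>N. w t = (\<Sum>i<k. c i t *s u i t)"
    using w unfolding hc_def by blast
  define c' where "c' i = (if i < k then c i else (\<lambda>t. 0))" for i
  have hc': "c' i holomorphic_on N" for i using c(1) by (simp add: c'_def)
  have wc': "w t = (\<Sum>i<k. c' i t *s u i t)" if "t \<in> N" for t
    using c(2) that by (simp add: c'_def)
  have eq: "conn A w t = (\<Sum>i<k. deriv (c' i) t *s u i t) + (\<Sum>i<k. c' i t *s u (Suc i) t)"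
    if t: "t \<in> N" for t
  proof -
    have "conn A w t = conn A (\<lambda>s. \<Sum>i<k. c' i s *s u i s) t"
      by (rule conn_local[OF N(1) t wc'])
    also have "\<dots> = (\<Sum>i<k. deriv (c' i) t *s u i t) + (\<Sum>i<k. c' i t *s u (Suc i) t)"
      by (rule conn_comb[OF N t hc'])
    finally show ?thesis .
  qed
  have "hc N k (\<lambda>t. (\<Sum>i<k. deriv (c' i) t *s u i t) + (\<Sum>i<k. c' i t *s u (Suc i) t))"
  proof (rule hc_add)
    show "hc N k (\<lambda>t. \<Sum>i<k. deriv (c' i) t *s u i t)"
    proof (rule hc_sum)
      fix i assume "i \<in> {..<k}"
      then show "hc N k (\<lambda>t. deriv (c' i) t *s u i t)"
        by (intro hc_smult holomorphic_deriv[OF hc' N(1)] hc_u_lt) auto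
    qed simp
    show "hc N k (\<lambda>t. \<Sum>i<k. c' i t *s u (Suc i) t)"
    proof (rule hc_sum)
      fix i assume i: "i \<in> {..<k}"
      have "hc N k (u (Suc i))"
      proof (cases "Suc i < k")
        case True then show ?thesis by (rule hc_u_lt)
      next
        case False then have "Suc i = k" using i by simp
        then show ?thesis using uk by simp
      qed
      then show "hc N k (\<lambda>t. c' i t *s u (Suc i) t)" by (rule hc_smult[OF hc'])
    qed simp
  qed
  then show ?thesis by (rule hc_cong) (use eq in auto)
qed

lemma hc_all:
  assumes N: "open N" "N \<subseteq> -C" and uk: "hc N k (u k)"
  shows "hc N k (u m)"
proof (induction m)
  case 0
  show ?case
  proof (cases "k = 0")
    case True then show ?thesis using uk by simp
  next
    case False then show ?thesis by (intro hc_u_lt) simp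
  qed
next
  case (Suc m)
  then show ?case unfolding uSuc by (rule hc_conn[OF N _ uk])
qed

end


context cs begin

lemma part2:
  assumes irr: "irreducible_conn A C" and nz: "\<exists>t. t \<notin> C \<and> \<omega> t \<noteq> 0"
  shows "\<exists>F. finite F \<and> (\<forall>b. b \<notin> C \<union> F \<longrightarrow> vec.span {u i b | i. i < CARD('n)} = UNIV)"
proof -
  define n where "n = CARD('n)"
  obtain h where h: "bij_betw h (UNIV::'n set) {0..<n}"
    using ex_bij_betw_finite_nat[of "UNIV::'n set"] by (auto simp: n_def)
  have hr: "h ` UNIV = {..<n}" using bij_betw_imp_surj_on[OF h] by (simp add: atLeast0LessThan)
  define D where "D t = det (\<chi> r j. u (h j) t $ r :: complex^'n^'n)" for t
  have spanD: "vec.span {u i t | i. i < n} = UNIV" if "D t \<noteq> 0" for t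
  proof -
    have "vec.span (range (\<lambda>j. u (h j) t)) = UNIV"
      by (rule det_cols_nz_span) (use that in \<open>simp add: D_def\<close>)
    moreover have "range (\<lambda>j. u (h j) t) = {u i t | i. i < n}"
    proof -
      have "range (\<lambda>j. u (h j) t) = (\<lambda>i. u i t) ` (h ` UNIV)" by (simp add: image_image)
      also have "\<dots> = {u i t | i. i < n}" unfolding hr by auto
      finally show ?thesis .
    qed
    ultimately show ?thesis by simp
  qed
  have ratD: "rational_on (-C) D"
    unfolding D_def by (rule rat_det) (use ratu in \<open>simp add: rational_vec_on_def\<close>)
  show ?thesis
  proof (cases "\<exists>t\<in>-C. D t \<noteq> 0")
    case True
    then obtain t0 where t0: "t0 \<in> -C" "D t0 \<noteq> 0" by blast
    obtain p q where pq: "\<And>t. t \<in> -C \<Longrightarrow> poly q t \<noteq> 0 \<and> D t = poly p t / poly q t"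
      using ratD unfolding rational_on_def by blast
    have "p \<noteq> 0" using pq[OF t0(1)] t0(2) by auto
    then have fin: "finite {t. poly p t = 0}" by (rule poly_roots_finite)
    show ?thesis
    proof (intro exI[of _ "{t. poly p t = 0}"] conjI allI impI fin)
      fix b assume "b \<notin> C \<union> {t. poly p t = 0}"
      then have "b \<in> -C" "poly p b \<noteq> 0" by auto
      then have "D b \<noteq> 0" using pq[of b] by auto
      then show "vec.span {u i b | i. i < CARD('n)} = UNIV" using spanD n_def by simp
    qed
  next
    case False
    then have D0: "\<And>t. t \<in> -C \<Longrightarrow> D t = 0" by blast
    define dep where "dep m t \<longleftrightarrow> (\<exists>a. (\<exists>i<m. a i \<noteq> 0) \<and> (\<Sum>i<m. a i *s u i t) = (0::complex^'n))"
      for m t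
    have depn: "dep n t" if t: "t \<in> -C" for t
    proof -
      obtain x where x: "x \<noteq> 0" "(\<Sum>j\<in>UNIV. x$j *s u (h j) t) = 0"
        using det_cols_zero[of "\<lambda>j. u (h j) t"] D0[OF t] by (auto simp: D_def)
      define a where "a i = x $ (inv_into UNIV h i)" for i
      have injh: "inj h" using h by (simp add: bij_betw_def)
      have h': "bij_betw h (UNIV::'n set) {..<n}" using h by (simp add: atLeast0LessThan)
      have "(\<Sum>i<n. a i *s u i t) = (\<Sum>j\<in>UNIV. a (h j) *s u (h j) t)"
        by (rule sum.reindex_bij_betw[OF h', symmetric])
      also have "\<dots> = 0" using x(2) by (simp add: a_def inv_into_f_f[OF injh])
      finally have s0: "(\<Sum>i<n. a i *s u i t) = 0" .
      obtain j where "x $ j \<noteq> 0" using x(1) by (auto simp: vec_eq_iff)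
      moreover have "h j < n" using hr by auto
      ultimately have "\<exists>i<n. a i \<noteq> 0" by (intro exI[of _ "h j"]) (simp add: a_def inv_into_f_f[OF injh])
      with s0 show ?thesis unfolding dep_def by blast
    qed
    obtain tw where tw: "tw \<notin> C" "\<omega> tw \<noteq> 0" using nz by blast
    have not1: "\<not> dep 1 tw"
    proof
      assume "dep 1 tw"
      then obtain a where "a 0 \<noteq> 0" "a 0 *s u 0 tw = 0" unfolding dep_def by auto
      then have "u 0 tw = 0" by simp
      then show False using tw(2) by (simp add: u0)
    qed
    have not0: "\<not> dep 0 tw" unfolding dep_def by simp
    define K where "K = (LEAST m. \<forall>t\<in>-C. dep m t)"
    have KP: "\<forall>t\<in>-C. dep K t" unfolding K_def by (rule LeastI[of _ n]) (use depn in blast)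
    have Kn: "K \<le> n" unfolding K_def by (rule Least_le) (use depn in blast)
    have K0: "K \<noteq> 0"
    proof
      assume "K = 0"
      then have "dep 0 tw" using KP tw(1) by simp
      with not0 show False by blast
    qed
    have K1: "K \<noteq> 1"
    proof
      assume "K = 1"
      then have "dep 1 tw" using KP tw(1) by simp
      with not1 show False by blast
    qed
    obtain k where k: "K = Suc k" using K0 not0_implies_Suc by blast
    have kpos: "k \<noteq> 0" using K1 k by simp
    have kn: "k < n" using Kn k by simp
    have "\<not> (\<forall>t\<in>-C. dep k t)" unfolding K_def by (rule not_less_Least) (use k K_def in simp)
    then obtain t1 where t1: "t1 \<in> -C" "\<not> dep k t1" by blast
    have ind: "\<forall>i<k. a i = 0" if "(\<Sum>i<k. a i *s u i t1) = 0" for a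
      using t1(2) that unfolding dep_def by blast
    have depk: "\<exists>a. (\<exists>i<Suc k. a i \<noteq> 0) \<and> (\<Sum>i<Suc k. a i *s u i t) = 0" if "t \<in> -C" for t
      using KP that k unfolding dep_def by simp
    obtain \<rho> c where loc: "\<rho> > 0" "ball t1 \<rho> \<subseteq> -C" "\<forall>i<k. c i holomorphic_on ball t1 \<rho>"
      "\<forall>t\<in>ball t1 \<rho>. u k t = (\<Sum>i<k. c i t *s u i t)"
      using loc[OF t1(1) ind depk] by blast
    have "hc (ball t1 \<rho>) k (u k)" unfolding hc_def using loc(3,4) by blast
    then have hcm: "hc (ball t1 \<rho>) k (u m)" for m by (rule hc_all[OF open_ball loc(2)])
    define S' where "S' = (\<lambda>i. u i t1) ` {..<k}"
    have inS: "u m t1 \<in> vec.span S'" for m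
    proof -
      obtain c' where c': "\<forall>t\<in>ball t1 \<rho>. u m t = (\<Sum>i<k. c' i t *s u i t)"
        using hcm[of m] unfolding hc_def by blast
      have "u m t1 = (\<Sum>i<k. c' i t1 *s u i t1)" using c' loc(1) by simp
      also have "\<dots> \<in> vec.span S'"
        by (intro vec.span_sum vec.span_scale vec.span_base) (auto simp: S'_def)
      finally show ?thesis .
    qed
    have "vec.span {u i t1 | i. True} = UNIV"
      using part1[OF irr nz, of t1] t1(1) by simp
    moreover have "vec.span {u i t1 | i. True} \<subseteq> vec.span S'"
      by (rule vec.span_minimal) (use inS in auto)
    ultimately have "UNIV \<subseteq> vec.span S'" by simp
    then have "vec.dim (UNIV :: (complex^'n) set) \<le> card S'"
      by (rule vec.dim_le_card) (simp add: S'_def)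
    also have "\<dots> \<le> k" unfolding S'_def using card_image_le[of "{..<k}" "\<lambda>i. u i t1"] by simp
    finally have "n \<le> k" by (simp add: n_def card_cart_basis)
    with kn show ?thesis by simp
  qed
qed

end

theorem proposition1:
  fixes C :: "complex set"
    and A :: "complex \<Rightarrow> complex^'n^'n"
    and \<omega> :: "complex \<Rightarrow> complex^'n"
  assumes "finite C"
    and "rational_mat_on (- C) A"
    and "irreducible_conn A C"
    and "rational_vec_on (- C) \<omega>"
    and "\<exists>t. t \<notin> C \<and> \<omega> t \<noteq> 0"
  shows "(\<forall>b. b \<notin> C \<longrightarrow> vec.span {((conn A ^^ i) \<omega>) b | i. True} = UNIV)
       \<and> (\<exists>F. finite F \<and> (\<forall>b. b \<notin> C \<union> F \<longrightarrow>
              vec.span {((conn A ^^ i) \<omega>) b | i. i < CARD('n)} = UNIV))"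
proof -
  interpret cs A C \<omega> by unfold_locales (use assms in auto)
  have "\<forall>b. b \<notin> C \<longrightarrow> vec.span {u i b | i. True} = UNIV"
    using part1[OF assms(3) assms(5)] by blast
  moreover have "\<exists>F. finite F \<and> (\<forall>b. b \<notin> C \<union> F \<longrightarrow> vec.span {u i b | i. i < CARD('n)} = UNIV)"
    by (rule part2[OF assms(3) assms(5)])
  ultimately show ?thesis by (simp add: u_def)
qed


end
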